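(* Let $N\ge 1$ and let $\mathcal{G}_N$ be the set of all real symmetric positive semi-definite $N\times N$ matrices $G$ with $G_{\mu\mu}=1$ for $\mu=1,\ldots,N$. Let $\mathsf{Aut}$ be the group of all affine bijections $\sigma:\mathcal{G}_N\to\mathcal{G}_N$, and let $\mathsf{Sym}$ be the subgroup of $\mathsf{Aut}$ generated by the maps $\Pi_\pi$ ($\pi\in S_N$) and $\mathsf{R}_{\mathcal T}$ ($\mathcal T\subseteq\{1,\ldots,N\}$) defined below. Then $\mathsf{Aut}=\mathsf{Sym}$.
   Context: For a permutation $\pi\in S_N$ let $U(\pi)$ be the $N\times N$ matrix with entries $U(\pi)_{\mu\nu}=\delta_{\mu,\pi(\nu)}$, and define $\Pi_\pi(G)=U(\pi)^{-1}GU(\pi)$, so that $\Pi_\pi(G)_{\mu\nu}=G_{\pi(\mu)\pi(\nu)}$. For a subset $\mathcal T\subseteq\{1,\ldots,N\}$ let $V_{\mathcal T}$ be the diagonal matrix with $(V_{\mathcal T})_{\mu\mu}=-1$ if $\mu\in\mathcal T$ and $+1$ otherwise, and define $\mathsf{R}_{\mathcal T}(G)=V_{\mathcal T}GV_{\mathcal T}$. Both kinds of maps are affine bijections of $\mathcal{G}_N$ onto itself. *)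

theory Defs
  imports "HOL-Analysis.Analysis" "HOL-Combinatorics.Permutations"
begin

text \<open>N x N real matrices, with N = CARD('n) (any N >= 1).\<close>

definition GN :: "(real^'n^'n) set" where
  "GN = {G. transpose G = G \<and> (\<forall>x. 0 \<le> x \<bullet> (G *v x)) \<and> (\<forall>\<mu>. G $ \<mu> $ \<mu> = 1)}"

definition Umat :: "('n \<Rightarrow> 'n) \<Rightarrow> real^'n^'n" where
  "Umat \<pi> = (\<chi> \<mu> \<nu>. if \<mu> = \<pi> \<nu> then 1 else 0)"

definition PiMap :: "('n \<Rightarrow> 'n) \<Rightarrow> real^'n^'n \<Rightarrow> real^'n^'n" where
  "PiMap \<pi> G = matrix_inv (Umat \<pi>) ** G ** Umat \<pi>"

definition Vmat :: "'n set \<Rightarrow> real^'n^'n" where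
  "Vmat T = (\<chi> \<mu> \<nu>. if \<mu> = \<nu> then (if \<mu> \<in> T then -1 else 1) else 0)"

definition RMap :: "'n set \<Rightarrow> real^'n^'n \<Rightarrow> real^'n^'n" where
  "RMap T G = Vmat T ** G ** Vmat T"

definition affine_on :: "'a::real_vector set \<Rightarrow> ('a \<Rightarrow> 'a) \<Rightarrow> bool" where
  "affine_on S f \<longleftrightarrow> (\<forall>x\<in>S. \<forall>y\<in>S. \<forall>t::real. 0 \<le> t \<and> t \<le> 1 \<longrightarrow>
      f ((1 - t) *\<^sub>R x + t *\<^sub>R y) = (1 - t) *\<^sub>R f x + t *\<^sub>R f y)"

text \<open>Maps of G_N are represented by functions that are the identity outside G_N.\<close>
definition extGN :: "(real^'n^'n \<Rightarrow> real^'n^'n) \<Rightarrow> real^'n^'n \<Rightarrow> real^'n^'n" where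
  "extGN f = (\<lambda>G. if G \<in> GN then f G else G)"

definition Aut :: "(real^'n^'n \<Rightarrow> real^'n^'n) set" where
  "Aut = {\<sigma>. bij_betw \<sigma> GN GN \<and> affine_on GN \<sigma> \<and> (\<forall>G. G \<notin> GN \<longrightarrow> \<sigma> G = G)}"

text \<open>Subgroup generated by the Pi_pi and R_T: all finite products of generators and
  their inverses (inverses taken as maps of G_N).\<close>
inductive_set Sym :: "(real^'n^'n \<Rightarrow> real^'n^'n) set" where
  Sym_id: "(\<lambda>G. G) \<in> Sym"
| Sym_Pi: "\<sigma> \<in> Sym \<Longrightarrow> \<pi> permutes UNIV \<Longrightarrow> extGN (PiMap \<pi>) \<circ> \<sigma> \<in> Sym"
| Sym_Pi_inv: "\<sigma> \<in> Sym \<Longrightarrow> \<pi> permutes UNIV \<Longrightarrow> extGN (inv_into GN (PiMap \<pi>)) \<circ> \<sigma> \<in> Sym"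
| Sym_R: "\<sigma> \<in> Sym \<Longrightarrow> extGN (RMap T) \<circ> \<sigma> \<in> Sym"
| Sym_R_inv: "\<sigma> \<in> Sym \<Longrightarrow> extGN (inv_into GN (RMap T)) \<circ> \<sigma> \<in> Sym"

end

theory Submission
  imports Defs
begin

definition qf :: "real^'n^'n \<Rightarrow> real^'n \<Rightarrow> real" where
  "qf G x = (\<Sum>u\<in>UNIV. \<Sum>w\<in>UNIV. x$u * G$u$w * x$w)"

lemma inner_mv_qf: "x \<bullet> (G *v x) = qf G x"
  by (simp add: qf_def inner_vec_def matrix_vector_mult_def sum_distrib_left mult.assoc)

lemma GN_iff: "G \<in> GN \<longleftrightarrow> (\<forall>u w. G$u$w = G$w$u) \<and> (\<forall>x. 0 \<le> qf G x) \<and> (\<forall>u. G$u$u = 1)"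
  unfolding GN_def by (auto simp: inner_mv_qf vec_eq_iff transpose_def)

definition permM :: "('n \<Rightarrow> 'n) \<Rightarrow> real^'n^'n \<Rightarrow> real^'n^'n" where
  "permM p G = (\<chi> u w. G $ p u $ p w)"

definition sgnM :: "('n \<Rightarrow> real) \<Rightarrow> real^'n^'n \<Rightarrow> real^'n^'n" where
  "sgnM s G = (\<chi> u w. s u * G $ u $ w * s w)"

lemma Umat_mul:
  shows "Umat p ** Umat q = Umat (p \<circ> q)"
proof -
  have "(\<Sum>k\<in>UNIV. (if u = p k then 1 else 0) * (if k = q w then 1 else (0::real))) =
        (if u = p (q w) then 1 else 0)" for u w
  proof -
    have "(\<Sum>k\<in>UNIV. (if u = p k then 1 else 0) * (if k = q w then 1 else (0::real))) =
          (\<Sum>k\<in>UNIV. if k = q w then (if u = p k then 1 else 0) else 0)"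
      by (rule sum.cong) auto
    also have "\<dots> = (if u = p (q w) then 1 else 0)" by simp
    finally show ?thesis .
  qed
  then show ?thesis by (simp add: Umat_def matrix_matrix_mult_def vec_eq_iff)
qed

lemma Umat_id: "Umat id = mat 1"
  by (simp add: Umat_def mat_def vec_eq_iff)

lemma matrix_inv_eqI:
  fixes A B :: "real^'n^'n"
  assumes "A ** B = mat 1" "B ** A = mat 1"
  shows "matrix_inv A = B"
proof -
  have ex: "\<exists>A'. A ** A' = mat 1 \<and> A' ** A = mat 1" using assms by blast
  define C where "C = matrix_inv A"
  have C: "A ** C = mat 1 \<and> C ** A = mat 1"
    unfolding C_def matrix_inv_def by (rule someI_ex[OF ex])
  have "C = C ** (A ** B)" using assms by simp
  also have "\<dots> = (C ** A) ** B" by (simp add: matrix_mul_assoc)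
  also have "\<dots> = B" using C by simp
  finally show ?thesis unfolding C_def .
qed

lemma PiMap_eq:
  assumes "p permutes UNIV"
  shows "PiMap p G = permM p G"
proof -
  have inv1: "Umat p ** Umat (inv p) = mat 1" "Umat (inv p) ** Umat p = mat 1"
    using assms by (simp_all add: Umat_mul permutes_inv_o Umat_id)
  have mi: "matrix_inv (Umat p) = Umat (inv p)" by (rule matrix_inv_eqI[OF inv1])
  have e1: "(Umat (inv p) ** G) = (\<chi> u w. G $ p u $ w)"
  proof -
    have "(\<Sum>k\<in>UNIV. (if u = inv p k then 1 else 0) * G$k$w) = G $ p u $ w" for u w
    proof -
      have "(\<Sum>k\<in>UNIV. (if u = inv p k then 1 else 0) * G$k$w) = (\<Sum>k\<in>UNIV. if k = p u then G$k$w else 0)"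
        apply (rule sum.cong, simp)
        using assms by (auto simp: permutes_inverses)
      then show ?thesis by simp
    qed
    then show ?thesis by (simp add: Umat_def matrix_matrix_mult_def vec_eq_iff)
  qed
  have e2: "(\<chi> u w. G $ p u $ w) ** Umat p = permM p G"
  proof -
    have "(\<Sum>k\<in>UNIV. G $ p u $ k * (if k = p w then 1 else 0)) = G $ p u $ p w" for u w
    proof -
      have "(\<Sum>k\<in>UNIV. G $ p u $ k * (if k = p w then 1 else 0)) = (\<Sum>k\<in>UNIV. if k = p w then G $ p u $ k else 0)"
        by (rule sum.cong) auto
      then show ?thesis by simp
    qed
    then show ?thesis by (simp add: Umat_def matrix_matrix_mult_def vec_eq_iff permM_def)
  qed
  show ?thesis unfolding PiMap_def mi e1 e2 ..
qed

lemma RMap_eq: "RMap T G = sgnM (\<lambda>u. if u \<in> T then -1 else 1) G"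
proof -
  let ?s = "\<lambda>u. if u \<in> T then -1 else (1::real)"
  have e1: "Vmat T ** G = (\<chi> u w. ?s u * G$u$w)"
  proof -
    have "(\<Sum>k\<in>UNIV. (if u = k then ?s u else 0) * G$k$w) = ?s u * G$u$w" for u w
    proof -
      have "(\<Sum>k\<in>UNIV. (if u = k then ?s u else 0) * G$k$w) = (\<Sum>k\<in>UNIV. if k = u then ?s u * G$k$w else 0)"
        by (rule sum.cong) auto
      then show ?thesis by simp
    qed
    then show ?thesis by (simp add: Vmat_def matrix_matrix_mult_def vec_eq_iff if_distrib cong: if_cong)
  qed
  have e2: "(\<chi> u w. ?s u * G$u$w) ** Vmat T = sgnM ?s G"
  proof -
    have "(\<Sum>k\<in>UNIV. ?s u * G$u$k * (if k = w then ?s k else 0)) = ?s u * G$u$w * ?s w" for u w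
    proof -
      have "(\<Sum>k\<in>UNIV. ?s u * G$u$k * (if k = w then ?s k else 0)) = (\<Sum>k\<in>UNIV. if k = w then ?s u * G$u$k * ?s k else 0)"
        by (rule sum.cong) auto
      then show ?thesis by simp
    qed
    then show ?thesis by (simp add: Vmat_def matrix_matrix_mult_def vec_eq_iff sgnM_def)
  qed
  show ?thesis unfolding RMap_def e1 e2 ..
qed

lemma convex_GN: "x \<in> GN \<Longrightarrow> y \<in> GN \<Longrightarrow> 0 \<le> t \<Longrightarrow> t \<le> 1 \<Longrightarrow> (1 - t) *\<^sub>R x + t *\<^sub>R y \<in> GN"
proof -
  assume x: "x \<in> GN" and y: "y \<in> GN" and t: "0 \<le> t" "t \<le> 1"
  have q: "qf ((1 - t) *\<^sub>R x + t *\<^sub>R y) v = (1 - t) * qf x v + t * qf y v" for v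
  proof -
    have "qf ((1 - t) *\<^sub>R x + t *\<^sub>R y) v = (\<Sum>u\<in>UNIV. \<Sum>w\<in>UNIV. (1 - t) * (v$u * x$u$w * v$w) + t * (v$u * y$u$w * v$w))"
      unfolding qf_def by (simp add: algebra_simps)
    also have "\<dots> = (1 - t) * qf x v + t * qf y v"
      unfolding qf_def by (simp add: sum.distrib sum_distrib_left)
    finally show ?thesis .
  qed
  show ?thesis using x y t unfolding GN_iff q by auto
qed

lemma qf_permM:
  assumes p: "p permutes UNIV"
  shows "qf (permM p G) (\<chi> u. y $ p u) = qf G y"
proof -
  have "qf (permM p G) (\<chi> u. y $ p u) = (\<Sum>u\<in>UNIV. \<Sum>w\<in>UNIV. y $ p u * G $ p u $ p w * y $ p w)"
    unfolding qf_def permM_def by simp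
  also have "\<dots> = (\<Sum>u\<in>UNIV. \<Sum>w\<in>UNIV. y $ p u * G $ p u $ w * y $ w)"
  proof (rule sum.cong[OF refl])
    fix u
    show "(\<Sum>w\<in>UNIV. y $ p u * G $ p u $ p w * y $ p w) = (\<Sum>w\<in>UNIV. y $ p u * G $ p u $ w * y $ w)"
      using sum.permute[OF p, of "\<lambda>w. y $ p u * G $ p u $ w * y $ w"] by (simp add: o_def)
  qed
  also have "\<dots> = (\<Sum>u\<in>UNIV. \<Sum>w\<in>UNIV. y $ u * G $ u $ w * y $ w)"
    using sum.permute[OF p, of "\<lambda>u. \<Sum>w\<in>UNIV. y $ u * G $ u $ w * y $ w"] by (simp add: o_def)
  finally show ?thesis unfolding qf_def .
qed

lemma permM_GN:
  assumes p: "p permutes UNIV" and G: "G \<in> GN"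
  shows "permM p G \<in> GN"
proof -
  have "0 \<le> qf (permM p G) x" for x
  proof -
    define y where "y = (\<chi> v. x $ inv p v)"
    have "x = (\<chi> u. y $ p u)" using p by (simp add: y_def vec_eq_iff permutes_inverses)
    then have "qf (permM p G) x = qf G y" using qf_permM[OF p] by metis
    then show ?thesis using G unfolding GN_iff by simp
  qed
  then show ?thesis using G unfolding GN_iff by (simp add: permM_def)
qed

lemma sgnM_GN:
  assumes s: "\<And>u. s u = 1 \<or> s u = -1" and G: "G \<in> GN"
  shows "sgnM s G \<in> GN"
proof -
  have "qf (sgnM s G) x = qf G (\<chi> v. s v * x $ v)" for x
    by (simp add: qf_def sgnM_def mult_ac)
  moreover have "s u * s u = 1" for u using s[of u] by auto
  ultimately show ?thesis using G unfolding GN_iff by (simp add: sgnM_def mult_ac)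
qed

lemma permM_comp: "permM p (permM q G) = permM (q \<circ> p) G"
  by (simp add: permM_def)

lemma permM_id: "permM id G = G"
  by (simp add: permM_def vec_eq_iff)

lemma permM_inv:
  assumes "p permutes UNIV"
  shows "permM p (permM (inv p) G) = G" "permM (inv p) (permM p G) = G"
  using assms by (simp_all add: permM_comp permutes_inv_o permM_id)

lemma sgnM_inv:
  assumes s: "\<And>u. s u = 1 \<or> s u = -1"
  shows "sgnM s (sgnM s G) = G"
proof -
  have "s u * s u = 1" for u using s[of u] by auto
  then show ?thesis by (simp add: sgnM_def vec_eq_iff mult_ac)
qed

lemma permM_affine: "affine_on S (permM p)"
  unfolding affine_on_def by (simp add: permM_def vec_eq_iff)

lemma sgnM_affine: "affine_on S (sgnM s)"
  unfolding affine_on_def by (simp add: sgnM_def vec_eq_iff algebra_simps)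

lemma extGN_Aut:
  fixes f g :: "real^'n^'n \<Rightarrow> real^'n^'n"
  assumes f: "\<And>G. G \<in> GN \<Longrightarrow> f G \<in> GN" and g: "\<And>G. G \<in> GN \<Longrightarrow> g G \<in> GN"
    and gf: "\<And>G. G \<in> GN \<Longrightarrow> g (f G) = G" and fg: "\<And>G. G \<in> GN \<Longrightarrow> f (g G) = G"
    and aff: "affine_on GN f"
  shows "extGN f \<in> Aut"
proof -
  have b: "bij_betw f GN GN"
    by (rule bij_betw_byWitness[where f'=g]) (use f g gf fg in auto)
  have "bij_betw (extGN f) GN GN"
    using b by (rule bij_betw_cong[THEN iffD1, rotated]) (simp add: extGN_def)
  moreover have "affine_on GN (extGN f)"
    unfolding affine_on_def
  proof (intro ballI allI impI)
    fix x y :: "real^'n^'n" and t :: real assume xy: "x \<in> GN" "y \<in> GN" and t: "0 \<le> t \<and> t \<le> 1"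
    have "(1 - t) *\<^sub>R x + t *\<^sub>R y \<in> GN" using convex_GN xy t by blast
    then show "extGN f ((1 - t) *\<^sub>R x + t *\<^sub>R y) = (1 - t) *\<^sub>R extGN f x + t *\<^sub>R extGN f y"
      using aff xy t unfolding affine_on_def extGN_def by simp
  qed
  moreover have "\<forall>G. G \<notin> GN \<longrightarrow> extGN f G = G" by (simp add: extGN_def)
  ultimately show ?thesis unfolding Aut_def by blast
qed

lemma Aut_comp:
  fixes a b :: "real^'n^'n \<Rightarrow> real^'n^'n"
  assumes a: "a \<in> Aut" and b: "b \<in> Aut"
  shows "a \<circ> b \<in> Aut"
proof -
  have ba: "bij_betw a GN GN" "bij_betw b GN GN" using a b unfolding Aut_def by auto
  have bb: "\<And>G. G \<in> GN \<Longrightarrow> b G \<in> GN" using ba(2) bij_betwE by blast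
  have "bij_betw (a \<circ> b) GN GN" using ba bij_betw_trans by blast
  moreover have "affine_on GN (a \<circ> b)"
    unfolding affine_on_def
  proof (intro ballI allI impI)
    fix x y :: "real^'n^'n" and t :: real assume xy: "x \<in> GN" "y \<in> GN" and t: "0 \<le> t \<and> t \<le> 1"
    have "b ((1 - t) *\<^sub>R x + t *\<^sub>R y) = (1 - t) *\<^sub>R b x + t *\<^sub>R b y"
      using b xy t unfolding Aut_def affine_on_def by blast
    moreover have "a ((1 - t) *\<^sub>R b x + t *\<^sub>R b y) = (1 - t) *\<^sub>R a (b x) + t *\<^sub>R a (b y)"
      using a bb xy t unfolding Aut_def affine_on_def by blast
    ultimately show "(a \<circ> b) ((1 - t) *\<^sub>R x + t *\<^sub>R y) = (1 - t) *\<^sub>R (a \<circ> b) x + t *\<^sub>R (a \<circ> b) y"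
      by simp
  qed
  moreover have "\<forall>G. G \<notin> GN \<longrightarrow> (a \<circ> b) G = G" using a b unfolding Aut_def by auto
  ultimately show ?thesis unfolding Aut_def by blast
qed

lemma inv_into_eq_on:
  fixes f g :: "real^'n^'n \<Rightarrow> real^'n^'n"
  assumes f: "\<And>G. G \<in> GN \<Longrightarrow> f G \<in> GN" and g: "\<And>G. G \<in> GN \<Longrightarrow> g G \<in> GN"
    and gf: "\<And>G. G \<in> GN \<Longrightarrow> g (f G) = G" and fg: "\<And>G. G \<in> GN \<Longrightarrow> f (g G) = G"
  shows "extGN (inv_into GN f) = extGN g"
proof -
  have inj: "inj_on f GN" by (metis gf inj_onI)
  have "G \<in> GN \<Longrightarrow> inv_into GN f G = g G" for G
    by (rule inv_into_f_eq[OF inj g fg])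
  then show ?thesis unfolding extGN_def by auto
qed

lemma sgn_T: "(\<lambda>u. if u \<in> T then -1 else (1::real)) u = 1 \<or> (\<lambda>u. if u \<in> T then -1 else (1::real)) u = -1"
  by auto

lemma Pi_Aut: "p permutes UNIV \<Longrightarrow> extGN (PiMap p) \<in> Aut"
  "p permutes UNIV \<Longrightarrow> extGN (inv_into GN (PiMap p)) \<in> Aut"
proof -
  assume p: "p permutes UNIV"
  have pi: "inv p permutes UNIV" using p by (simp add: permutes_inv)
  have e: "PiMap p = permM p" "PiMap (inv p) = permM (inv p)"
    using PiMap_eq[OF p] PiMap_eq[OF pi] by auto
  show "extGN (PiMap p) \<in> Aut" unfolding e
    by (rule extGN_Aut[where g="permM (inv p)"]) (simp_all add: p pi permM_GN permM_inv permM_affine)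
  have "extGN (inv_into GN (PiMap p)) = extGN (permM (inv p))" unfolding e
    by (rule inv_into_eq_on) (simp_all add: p pi permM_GN permM_inv)
  moreover have "extGN (permM (inv p)) \<in> Aut"
    by (rule extGN_Aut[where g="permM p"]) (simp_all add: p pi permM_GN permM_inv permM_affine)
  ultimately show "extGN (inv_into GN (PiMap p)) \<in> Aut" by simp
qed

lemma R_Aut: "extGN (RMap T) \<in> Aut" "extGN (inv_into GN (RMap T)) \<in> Aut"
proof -
  let ?s = "\<lambda>u. if u \<in> T then -1 else (1::real)"
  have e: "RMap T = sgnM ?s" using RMap_eq by blast
  show "extGN (RMap T) \<in> Aut" unfolding e
    by (rule extGN_Aut[where g="sgnM ?s"]) (simp_all add: sgnM_GN[OF sgn_T] sgnM_inv[OF sgn_T] sgnM_affine)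
  have "extGN (inv_into GN (RMap T)) = extGN (sgnM ?s)" unfolding e
    by (rule inv_into_eq_on) (simp_all add: sgnM_GN[OF sgn_T] sgnM_inv[OF sgn_T])
  moreover have "extGN (sgnM ?s) \<in> Aut"
    by (rule extGN_Aut[where g="sgnM ?s"]) (simp_all add: sgnM_GN[OF sgn_T] sgnM_inv[OF sgn_T] sgnM_affine)
  ultimately show "extGN (inv_into GN (RMap T)) \<in> Aut" by simp
qed

lemma id_Aut: "(\<lambda>G. G) \<in> Aut"
  unfolding Aut_def affine_on_def by (simp add: bij_betw_id[unfolded id_def])

lemma Sym_sub_Aut: "Sym \<subseteq> Aut"
proof
  fix s assume "s \<in> Sym"
  then show "s \<in> Aut"
  proof induct
    case Sym_id then show ?case by (rule id_Aut)
  next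
    case (Sym_Pi \<sigma> \<pi>) then show ?case by (intro Aut_comp Pi_Aut)
  next
    case (Sym_Pi_inv \<sigma> \<pi>) then show ?case by (intro Aut_comp Pi_Aut)
  next
    case (Sym_R \<sigma> T) then show ?case by (intro Aut_comp R_Aut)
  next
    case (Sym_R_inv \<sigma> T) then show ?case by (intro Aut_comp R_Aut)
  qed
qed

definition S0 :: "real^'n^'n \<Rightarrow> bool" where
  "S0 X \<longleftrightarrow> (\<forall>i j. X$i$j = X$j$i) \<and> (\<forall>i. X$i$i = 0)"

definition Pm :: "real^'n^'n \<Rightarrow> real^'n^'n" where
  "Pm X = (\<chi> i j. if i = j then 0 else (X$i$j + X$j$i) / 2)"

definition bnd :: "real^'n^'n \<Rightarrow> real" where
  "bnd X = (\<Sum>i\<in>UNIV. \<Sum>j\<in>UNIV. \<bar>X$i$j\<bar>)"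

lemma bnd_ge: "\<bar>X$i$j\<bar> \<le> bnd X"
proof -
  have "\<bar>X$i$j\<bar> \<le> (\<Sum>j\<in>UNIV. \<bar>X$i$j\<bar>)" by (rule member_le_sum) auto
  also have "\<dots> \<le> bnd X" unfolding bnd_def
    by (rule member_le_sum[of i UNIV "\<lambda>i. \<Sum>j\<in>UNIV. \<bar>X$i$j\<bar>"]) (auto intro: sum_nonneg)
  finally show ?thesis .
qed

lemma bnd_nonneg: "0 \<le> bnd X"
  unfolding bnd_def by (auto intro: sum_nonneg)

lemma S0_Pm: "S0 (Pm X)" by (simp add: S0_def Pm_def)
lemma Pm_S0: "S0 X \<Longrightarrow> Pm X = X" by (simp add: S0_def Pm_def vec_eq_iff)
lemma Pm_add: "Pm (X + Y) = Pm X + Pm Y" by (simp add: Pm_def vec_eq_iff add_divide_distrib)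
lemma Pm_scale: "Pm (c *\<^sub>R X) = c *\<^sub>R Pm X" by (simp add: Pm_def vec_eq_iff algebra_simps)
lemma S0_add: "S0 X \<Longrightarrow> S0 Y \<Longrightarrow> S0 (X + Y)" by (simp add: S0_def)
lemma S0_scale: "S0 X \<Longrightarrow> S0 (c *\<^sub>R X)" by (simp add: S0_def)
lemma S0_GN: "G \<in> GN \<Longrightarrow> S0 (G - mat 1)" by (simp add: S0_def GN_iff mat_def)

lemma I_GN: "mat 1 \<in> GN"
proof -
  have q: "qf (mat 1) x = (\<Sum>u\<in>UNIV. x$u * x$u)" for x :: "real^'n"
  proof -
    have "qf (mat 1) x = (\<Sum>u\<in>UNIV. \<Sum>w\<in>UNIV. if w = u then x$u * x$u else 0)"
      unfolding qf_def by (intro sum.cong) (auto simp: mat_def)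
    then show ?thesis by simp
  qed
  have "0 \<le> qf (mat 1) x" for x :: "real^'n" unfolding q by (rule sum_nonneg) simp
  then show ?thesis unfolding GN_iff by (auto simp: mat_def)
qed

lemma qf_add: "qf (A + B) x = qf A x + qf B x"
  by (simp add: qf_def algebra_simps sum.distrib)

lemma small_GN:
  fixes H :: "real^'n^'n"
  assumes S: "S0 H" and sm: "\<And>i j. \<bar>H$i$j\<bar> \<le> 1 / real CARD('n)"
  shows "mat 1 + H \<in> GN"
proof -
  let ?N = "real CARD('n)"
  have Npos: "?N > 0" by simp
  have "0 \<le> qf (mat 1 + H) x" for x
  proof -
    have q1: "qf (mat 1) x = (\<Sum>u\<in>UNIV. x$u * x$u)"
    proof -
      have "qf (mat 1) x = (\<Sum>u\<in>UNIV. \<Sum>w\<in>UNIV. if w = u then x$u * x$u else 0)"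
        unfolding qf_def by (intro sum.cong) (auto simp: mat_def)
      then show ?thesis by simp
    qed
    have "\<bar>x$u * H$u$w * x$w\<bar> \<le> (1 / ?N) * ((x$u * x$u + x$w * x$w) / 2)" for u w
    proof -
      have "\<bar>x$u * H$u$w * x$w\<bar> = \<bar>H$u$w\<bar> * (\<bar>x$u\<bar> * \<bar>x$w\<bar>)" by (simp add: abs_mult)
      also have "\<dots> \<le> (1 / ?N) * (\<bar>x$u\<bar> * \<bar>x$w\<bar>)"
        by (rule mult_right_mono[OF sm]) simp
      also have "\<dots> \<le> (1 / ?N) * ((x$u * x$u + x$w * x$w) / 2)"
      proof (rule mult_left_mono)
        have "0 \<le> (\<bar>x$u\<bar> - \<bar>x$w\<bar>)^2" by simp
        then show "\<bar>x$u\<bar> * \<bar>x$w\<bar> \<le> (x$u * x$u + x$w * x$w) / 2"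
          by (simp add: power2_eq_square algebra_simps abs_mult_self_eq)
      qed simp
      finally show ?thesis .
    qed
    note bd = this
    have "\<bar>qf H x\<bar> \<le> (\<Sum>u\<in>UNIV. \<Sum>w\<in>UNIV. \<bar>x$u * H$u$w * x$w\<bar>)"
      unfolding qf_def by (rule order_trans[OF sum_abs]) (intro sum_mono sum_abs)
    also have "\<dots> \<le> (\<Sum>u\<in>UNIV. \<Sum>w\<in>UNIV. (1 / ?N) * ((x$u * x$u + x$w * x$w) / 2))"
      by (intro sum_mono bd)
    also have "\<dots> = (1 / ?N) * (\<Sum>u\<in>UNIV. \<Sum>w\<in>UNIV. (x$u * x$u + x$w * x$w) / 2)"
      by (simp add: sum_distrib_left)
    also have "(\<Sum>u\<in>UNIV. \<Sum>w\<in>UNIV. (x$u * x$u + x$w * x$w) / 2) = ?N * (\<Sum>u\<in>UNIV. x$u * x$u)"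
      by (simp add: sum.distrib add_divide_distrib sum_divide_distrib[symmetric] sum_distrib_left[symmetric])
    finally have "\<bar>qf H x\<bar> \<le> (\<Sum>u\<in>UNIV. x$u * x$u)" using Npos by simp
    then show ?thesis unfolding qf_add q1 by linarith
  qed
  moreover have "\<forall>u w. (mat 1 + H)$u$w = (mat 1 + H)$w$u" using S by (simp add: S0_def mat_def)
  moreover have "\<forall>u. (mat 1 + H)$u$u = 1" using S by (simp add: S0_def mat_def)
  ultimately show ?thesis unfolding GN_iff by blast
qed

definition lam :: "real^'n^'n \<Rightarrow> real" where
  "lam X = 1 / (real CARD('n) * (1 + bnd X))"

lemma lam_pos: "lam X > 0"
  unfolding lam_def using bnd_nonneg[of X] by (simp add: field_simps add_pos_nonneg)

lemma small_scale_GN: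
  fixes H :: "real^'n^'n"
  assumes S: "S0 H" and t: "0 \<le> t" "t * bnd H \<le> 1 / real CARD('n)"
  shows "mat 1 + t *\<^sub>R H \<in> GN"
proof (rule small_GN)
  show "S0 (t *\<^sub>R H)" using S by (rule S0_scale)
  fix i j
  have "\<bar>(t *\<^sub>R H)$i$j\<bar> = t * \<bar>H$i$j\<bar>" using t by (simp add: abs_mult)
  also have "\<dots> \<le> t * bnd H" using t(1) by (intro mult_left_mono bnd_ge)
  finally show "\<bar>(t *\<^sub>R H)$i$j\<bar> \<le> 1 / real CARD('n)" using t(2) by linarith
qed

lemma lam_GN: "S0 (H::real^'n^'n) \<Longrightarrow> mat 1 + lam H *\<^sub>R H \<in> GN"
proof (rule small_scale_GN)
  show "0 \<le> lam H" using lam_pos[of H] by simp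
  have "lam H * bnd H \<le> lam H * (1 + bnd H)" using lam_pos[of H] by (simp add: mult_left_mono)
  also have "\<dots> = 1 / real CARD('n)"
  proof -
    have "0 < real CARD('n) + bnd H * real CARD('n)"
      using bnd_nonneg[of H] by (simp add: add_pos_nonneg)
    then show ?thesis by (simp add: field_simps lam_def)
  qed
  finally show "lam H * bnd H \<le> 1 / real CARD('n)" .
qed

lemma bnd_Pm: "bnd (Pm X) \<le> bnd X"
proof -
  have "\<bar>Pm X$i$j\<bar> \<le> (\<bar>X$i$j\<bar> + \<bar>X$j$i\<bar>) / 2" for i j by (auto simp: Pm_def)
  then have "bnd (Pm X) \<le> (\<Sum>i\<in>UNIV. \<Sum>j\<in>UNIV. (\<bar>X$i$j\<bar> + \<bar>X$j$i\<bar>) / 2)"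
    unfolding bnd_def by (intro sum_mono) auto
  also have "\<dots> = bnd X" unfolding bnd_def
    by (simp add: sum.distrib add_divide_distrib sum_divide_distrib[symmetric])
       (simp add: sum.swap[of "\<lambda>i j. \<bar>X$j$i\<bar>"])
  finally show ?thesis .
qed

lemma lam_Pm_GN: "mat 1 + lam X *\<^sub>R Pm (X::real^'n^'n) \<in> GN"
proof (rule small_scale_GN)
  show "S0 (Pm X)" by (rule S0_Pm)
  show "0 \<le> lam X" using lam_pos[of X] by simp
  have "lam X * bnd (Pm X) \<le> lam X * (1 + bnd X)" using lam_pos[of X] bnd_Pm[of X]
    by (intro mult_left_mono) auto
  also have "\<dots> = 1 / real CARD('n)"
  proof -
    have "0 < real CARD('n) + bnd X * real CARD('n)"
      using bnd_nonneg[of X] by (simp add: add_pos_nonneg)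
    then show ?thesis by (simp add: field_simps lam_def)
  qed
  finally show "lam X * bnd (Pm X) \<le> 1 / real CARD('n)" .
qed

definition gf :: "(real^'n^'n \<Rightarrow> real^'n^'n) \<Rightarrow> real^'n^'n \<Rightarrow> real^'n^'n" where
  "gf f H = f (mat 1 + H) - f (mat 1)"

definition Lf :: "(real^'n^'n \<Rightarrow> real^'n^'n) \<Rightarrow> real^'n^'n \<Rightarrow> real^'n^'n" where
  "Lf f X = (1 / lam X) *\<^sub>R gf f (lam X *\<^sub>R Pm X)"

lemma lam_le_GN:
  fixes H :: "real^'n^'n"
  assumes S: "S0 H" and s: "0 \<le> s" "s \<le> lam H"
  shows "mat 1 + s *\<^sub>R H \<in> GN"
proof (rule small_scale_GN[OF S s(1)])
  have "s * bnd H \<le> lam H * bnd H" using s bnd_nonneg[of H] by (simp add: mult_right_mono)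
  also have "\<dots> \<le> lam H * (1 + bnd H)" using lam_pos[of H] by (simp add: mult_left_mono)
  also have "\<dots> = 1 / real CARD('n)"
  proof -
    have "0 < real CARD('n) + bnd H * real CARD('n)"
      using bnd_nonneg[of H] by (simp add: add_pos_nonneg)
    then show ?thesis by (simp add: field_simps lam_def)
  qed
  finally show "s * bnd H \<le> 1 / real CARD('n)" .
qed

lemma gf_scal:
  fixes f :: "real^'n^'n \<Rightarrow> real^'n^'n"
  assumes aff: "affine_on GN f" and H: "mat 1 + H \<in> GN" and s: "0 \<le> s" "s \<le> 1"
  shows "gf f (s *\<^sub>R H) = s *\<^sub>R gf f H"
proof -
  have e: "(1 - s) *\<^sub>R mat 1 + s *\<^sub>R (mat 1 + H) = mat 1 + s *\<^sub>R H"
    by (simp add: algebra_simps)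
  have "f (mat 1 + s *\<^sub>R H) = (1 - s) *\<^sub>R f (mat 1) + s *\<^sub>R f (mat 1 + H)"
    using aff I_GN H s unfolding affine_on_def e[symmetric] by blast
  then show ?thesis unfolding gf_def by (simp add: algebra_simps)
qed

lemma Lf_indep:
  fixes f :: "real^'n^'n \<Rightarrow> real^'n^'n"
  assumes aff: "affine_on GN f" and S: "S0 H" and t: "0 < t" and H: "mat 1 + t *\<^sub>R H \<in> GN"
  shows "Lf f H = (1 / t) *\<^sub>R gf f (t *\<^sub>R H)"
proof -
  let ?l = "lam H"
  have l: "?l > 0" by (rule lam_pos)
  have lG: "mat 1 + ?l *\<^sub>R H \<in> GN" using lam_le_GN[OF S] l by simp
  define m where "m = min t ?l"
  have m: "m > 0" using t l by (simp add: m_def)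
  have "gf f (m *\<^sub>R H) = gf f ((m / t) *\<^sub>R (t *\<^sub>R H))" using t by simp
  also have "\<dots> = (m / t) *\<^sub>R gf f (t *\<^sub>R H)"
    by (rule gf_scal[OF aff H]) (use m t in \<open>auto simp: m_def\<close>)
  finally have 1: "gf f (m *\<^sub>R H) = (m / t) *\<^sub>R gf f (t *\<^sub>R H)" .
  have "gf f (m *\<^sub>R H) = gf f ((m / ?l) *\<^sub>R (?l *\<^sub>R H))" using l by simp
  also have "\<dots> = (m / ?l) *\<^sub>R gf f (?l *\<^sub>R H)"
    by (rule gf_scal[OF aff lG]) (use m l in \<open>auto simp: m_def\<close>)
  finally have 2: "gf f (m *\<^sub>R H) = (m / ?l) *\<^sub>R gf f (?l *\<^sub>R H)" .
  have "Lf f H = (1 / ?l) *\<^sub>R gf f (?l *\<^sub>R H)" unfolding Lf_def Pm_S0[OF S] ..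
  also have "\<dots> = (1 / m) *\<^sub>R gf f (m *\<^sub>R H)" using 2 m l by simp
  also have "\<dots> = (1 / t) *\<^sub>R gf f (t *\<^sub>R H)" using 1 m t by simp
  finally show ?thesis .
qed

lemma Lf_Pm:
  fixes f :: "real^'n^'n \<Rightarrow> real^'n^'n"
  assumes aff: "affine_on GN f"
  shows "Lf f X = Lf f (Pm X)"
  using Lf_indep[OF aff S0_Pm lam_pos lam_Pm_GN, of X] unfolding Lf_def by simp

lemma Lf_add_S0:
  fixes f :: "real^'n^'n \<Rightarrow> real^'n^'n"
  assumes aff: "affine_on GN f" and S: "S0 H1" "S0 H2"
  shows "Lf f (H1 + H2) = Lf f H1 + Lf f H2"
proof -
  define t where "t = min (lam H1) (lam H2) / 2"
  have t: "t > 0" using lam_pos[of H1] lam_pos[of H2] by (simp add: t_def)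
  have G1: "mat 1 + (2 * t) *\<^sub>R H1 \<in> GN" using lam_le_GN[OF S(1), of "2 * t"] t by (simp add: t_def)
  have G2: "mat 1 + (2 * t) *\<^sub>R H2 \<in> GN" using lam_le_GN[OF S(2), of "2 * t"] t by (simp add: t_def)
  have e: "(1 - 1/2) *\<^sub>R (mat 1 + (2 * t) *\<^sub>R H1) + (1/2) *\<^sub>R (mat 1 + (2 * t) *\<^sub>R H2) = mat 1 + t *\<^sub>R (H1 + H2)"
    by (simp add: vec_eq_iff field_simps)
  have G12: "mat 1 + t *\<^sub>R (H1 + H2) \<in> GN"
    using convex_GN[OF G1 G2, of "1/2"] unfolding e by simp
  have fe0: "f ((1 - 1/2) *\<^sub>R (mat 1 + (2 * t) *\<^sub>R H1) + (1/2) *\<^sub>R (mat 1 + (2 * t) *\<^sub>R H2)) = (1 - 1/2) *\<^sub>R f (mat 1 + (2 * t) *\<^sub>R H1) + (1/2) *\<^sub>R f (mat 1 + (2 * t) *\<^sub>R H2)"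
    by (rule aff[unfolded affine_on_def, rule_format]) (use G1 G2 in auto)
  have fe: "f (mat 1 + t *\<^sub>R (H1 + H2)) = (1 - 1/2) *\<^sub>R f (mat 1 + (2 * t) *\<^sub>R H1) + (1/2) *\<^sub>R f (mat 1 + (2 * t) *\<^sub>R H2)"
    using fe0 unfolding e .
  have "Lf f (H1 + H2) = (1 / t) *\<^sub>R gf f (t *\<^sub>R (H1 + H2))"
    by (rule Lf_indep[OF aff S0_add[OF S] t G12])
  also have "\<dots> = (1 / (2 * t)) *\<^sub>R gf f ((2 * t) *\<^sub>R H1) + (1 / (2 * t)) *\<^sub>R gf f ((2 * t) *\<^sub>R H2)"
    unfolding gf_def fe using t by (simp add: vec_eq_iff field_simps)
  also have "\<dots> = Lf f H1 + Lf f H2"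
    using Lf_indep[OF aff S(1) _ G1] Lf_indep[OF aff S(2) _ G2] t by simp
  finally show ?thesis .
qed

lemma bnd_uminus: "bnd (- X) = bnd X" by (simp add: bnd_def)
lemma lam_uminus: "lam (- X) = lam X" by (simp add: lam_def bnd_uminus)

lemma Lf_uminus_S0:
  fixes f :: "real^'n^'n \<Rightarrow> real^'n^'n"
  assumes aff: "affine_on GN f" and S: "S0 H"
  shows "Lf f (- H) = - Lf f H"
proof -
  let ?t = "lam H"
  have t: "?t > 0" by (rule lam_pos)
  have Sm: "S0 (- H)" using S by (simp add: S0_def)
  have G1: "mat 1 + ?t *\<^sub>R H \<in> GN" using lam_le_GN[OF S, of ?t] t by simp
  have G2: "mat 1 + ?t *\<^sub>R (- H) \<in> GN" using lam_le_GN[OF Sm, of ?t] t by (simp add: lam_uminus)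
  have e: "(1 - 1/2) *\<^sub>R (mat 1 + ?t *\<^sub>R H) + (1/2) *\<^sub>R (mat 1 + ?t *\<^sub>R (- H)) = mat 1"
    by (simp add: vec_eq_iff field_simps)
  have fe0: "f ((1 - 1/2) *\<^sub>R (mat 1 + ?t *\<^sub>R H) + (1/2) *\<^sub>R (mat 1 + ?t *\<^sub>R (- H))) = (1 - 1/2) *\<^sub>R f (mat 1 + ?t *\<^sub>R H) + (1/2) *\<^sub>R f (mat 1 + ?t *\<^sub>R (- H))"
    by (rule aff[unfolded affine_on_def, rule_format]) (use G1 G2 in auto)
  have fe: "f (mat 1) = (1 - 1/2) *\<^sub>R f (mat 1 + ?t *\<^sub>R H) + (1/2) *\<^sub>R f (mat 1 + ?t *\<^sub>R (- H))"
    using fe0 unfolding e .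
  have "gf f (?t *\<^sub>R (- H)) = - gf f (?t *\<^sub>R H)"
    unfolding gf_def using fe by (simp add: algebra_simps)
  then show ?thesis
    using Lf_indep[OF aff S t G1] Lf_indep[OF aff Sm t G2] by simp
qed

lemma Lf_scale_S0:
  fixes f :: "real^'n^'n \<Rightarrow> real^'n^'n"
  assumes aff: "affine_on GN f" and S: "S0 H"
  shows "Lf f (c *\<^sub>R H) = c *\<^sub>R Lf f H"
proof -
  have pos: "Lf f (c *\<^sub>R H) = c *\<^sub>R Lf f H" if c: "c > 0" and S: "S0 H" for c and H :: "real^'n^'n"
  proof -
    let ?l = "lam H"
    have l: "?l > 0" by (rule lam_pos)
    have G: "mat 1 + (?l / c) *\<^sub>R (c *\<^sub>R H) \<in> GN" using lam_le_GN[OF S, of ?l] l c by simp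
    have "Lf f (c *\<^sub>R H) = (1 / (?l / c)) *\<^sub>R gf f ((?l / c) *\<^sub>R (c *\<^sub>R H))"
      by (rule Lf_indep[OF aff S0_scale[OF S] _ G]) (use l c in simp)
    also have "\<dots> = c *\<^sub>R ((1 / ?l) *\<^sub>R gf f (?l *\<^sub>R H))" using c by simp
    also have "(1 / ?l) *\<^sub>R gf f (?l *\<^sub>R H) = Lf f H" unfolding Lf_def Pm_S0[OF S] ..
    finally show ?thesis .
  qed
  consider "c > 0" | "c = 0" | "c < 0" by linarith
  then show ?thesis
  proof cases
    case 1 then show ?thesis using pos S by blast
  next
    case 2
    have "Pm 0 = (0::real^'n^'n)" by (simp add: Pm_def vec_eq_iff)
    then have "Lf f 0 = 0" unfolding Lf_def gf_def by simp
    then show ?thesis using 2 by simp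
  next
    case 3
    have Sm: "S0 (- H)" using S by (simp add: S0_def)
    have "Lf f (c *\<^sub>R H) = Lf f ((- c) *\<^sub>R (- H))" by simp
    also have "\<dots> = (- c) *\<^sub>R Lf f (- H)" by (rule pos[OF _ Sm]) (use 3 in simp)
    also have "\<dots> = c *\<^sub>R Lf f H" using Lf_uminus_S0[OF aff S] by simp
    finally show ?thesis .
  qed
qed

lemma Lf_linear:
  fixes f :: "real^'n^'n \<Rightarrow> real^'n^'n"
  assumes aff: "affine_on GN f"
  shows "linear (Lf f)"
proof (rule linearI)
  fix X Y :: "real^'n^'n"
  show "Lf f (X + Y) = Lf f X + Lf f Y"
    using Lf_Pm[OF aff, of "X + Y"] Lf_Pm[OF aff, of X] Lf_Pm[OF aff, of Y]
      Lf_add_S0[OF aff S0_Pm S0_Pm, of X Y] by (simp add: Pm_add)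
next
  fix c and X :: "real^'n^'n"
  show "Lf f (c *\<^sub>R X) = c *\<^sub>R Lf f X"
    using Lf_Pm[OF aff, of "c *\<^sub>R X"] Lf_Pm[OF aff, of X]
      Lf_scale_S0[OF aff S0_Pm, of c X] by (simp add: Pm_scale)
qed

lemma Lf_rep:
  fixes f :: "real^'n^'n \<Rightarrow> real^'n^'n"
  assumes aff: "affine_on GN f" and G: "G \<in> GN"
  shows "f G = f (mat 1) + Lf f (G - mat 1)"
proof -
  have "mat 1 + 1 *\<^sub>R (G - mat 1) \<in> GN" using G by simp
  from Lf_indep[OF aff S0_GN[OF G] _ this] show ?thesis by (simp add: gf_def)
qed

lemma Lf_inj:
  fixes f :: "real^'n^'n \<Rightarrow> real^'n^'n"
  assumes aff: "affine_on GN f" and inj: "inj_on f GN" and S: "S0 X" and z: "Lf f X = 0"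
  shows "X = 0"
proof -
  let ?t = "lam X"
  have t: "?t > 0" by (rule lam_pos)
  have G: "mat 1 + ?t *\<^sub>R X \<in> GN" using lam_le_GN[OF S, of ?t] t by simp
  have "f (mat 1 + ?t *\<^sub>R X) = f (mat 1) + Lf f (?t *\<^sub>R X)"
    using Lf_rep[OF aff G] by simp
  also have "Lf f (?t *\<^sub>R X) = ?t *\<^sub>R Lf f X" using Lf_linear[OF aff] by (simp add: linear_scale)
  finally have "f (mat 1 + ?t *\<^sub>R X) = f (mat 1)" using z by simp
  then have "mat 1 + ?t *\<^sub>R X = mat 1" using inj G I_GN by (meson inj_onD)
  then show ?thesis using t by simp
qed

definition Sgn :: "(real^'n) set" where
  "Sgn = {x. \<forall>i. x$i = 1 \<or> x$i = -1}"

definition outer :: "real^'n \<Rightarrow> real^'n^'n" where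
  "outer x = (\<chi> i j. x$i * x$j)"

definition vtx :: "real^'n^'n \<Rightarrow> bool" where
  "vtx p \<longleftrightarrow> p \<in> GN \<and> (\<exists>l c. linear (l :: real^'n^'n \<Rightarrow> real) \<and> c > 0 \<and>
      (\<forall>G\<in>GN. c * norm (G - p) \<le> l (G - p)))"

lemma qf_supp:
  assumes "\<And>u. u \<notin> S \<Longrightarrow> y$u = 0"
  shows "qf G y = (\<Sum>u\<in>S. \<Sum>w\<in>S. y$u * G$u$w * y$w)"
proof -
  have "(\<Sum>w\<in>UNIV. y$u * G$u$w * y$w) = (\<Sum>w\<in>S. y$u * G$u$w * y$w)" for u
    by (rule sum.mono_neutral_right) (auto simp: assms)
  then have "qf G y = (\<Sum>u\<in>UNIV. \<Sum>w\<in>S. y$u * G$u$w * y$w)"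
    unfolding qf_def by simp
  also have "\<dots> = (\<Sum>u\<in>S. \<Sum>w\<in>S. y$u * G$u$w * y$w)"
    by (rule sum.mono_neutral_right) (auto simp: assms)
  finally show ?thesis .
qed

lemma GN_sym: "G \<in> GN \<Longrightarrow> G$u$w = G$w$u" by (simp add: GN_iff)
lemma GN_diag: "G \<in> GN \<Longrightarrow> G$u$u = 1" by (simp add: GN_iff)
lemma GN_psd: "G \<in> GN \<Longrightarrow> 0 \<le> qf G y" by (simp add: GN_iff)

lemma qf_two:
  assumes ij: "i \<noteq> j" and y: "\<And>u. u \<noteq> i \<Longrightarrow> u \<noteq> j \<Longrightarrow> y$u = 0"
  shows "qf G y = y$i * G$i$i * y$i + y$i * G$i$j * y$j + y$j * G$j$i * y$i + y$j * G$j$j * y$j"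
proof -
  have "qf G y = (\<Sum>u\<in>{i,j}. \<Sum>w\<in>{i,j}. y$u * G$u$w * y$w)"
    by (rule qf_supp) (use y in auto)
  also have "\<dots> = y$i * G$i$i * y$i + y$i * G$i$j * y$j + y$j * G$j$i * y$i + y$j * G$j$j * y$j"
    using ij by (simp add: sum.insert)
  finally show ?thesis .
qed

lemma GN_bound:
  assumes G: "G \<in> GN"
  shows "\<bar>G$i$j\<bar> \<le> 1"
proof (cases "i = j")
  case True then show ?thesis using GN_diag[OF G] by simp
next
  case False
  have q: "0 \<le> 2 + 2 * s * G$i$j" if "s * s = 1" for s
  proof -
    define y where "y = (\<chi> u. if u = i then 1 else if u = j then s else (0::real))"
    have yi: "y$i = 1" "y$j = s" using False by (auto simp: y_def)
    have "qf G y = 1 * G$i$i * 1 + 1 * G$i$j * s + s * G$j$i * 1 + s * G$j$j * s"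
      using qf_two[OF False, of y G] yi by (simp add: y_def)
    also have "\<dots> = 2 + 2 * s * G$i$j" using that GN_diag[OF G, of i] GN_diag[OF G, of j] GN_sym[OF G, of j i]
      by (simp add: algebra_simps)
    finally show ?thesis using GN_psd[OF G, of y] by simp
  qed
  have "0 \<le> 2 + 2 * 1 * G$i$j" using q[of 1] by simp
  moreover have "0 \<le> 2 + 2 * (-1) * G$i$j" using q[of "-1"] by simp
  ultimately show ?thesis by linarith
qed

lemma norm_le_bnd: "norm (X :: real^'n^'n) \<le> bnd X"
proof -
  have "norm X \<le> (\<Sum>i\<in>UNIV. norm (X$i))"
    unfolding norm_vec_def by (rule L2_set_le_sum) simp
  also have "\<dots> \<le> bnd X" unfolding bnd_def by (intro sum_mono norm_le_l1_cart)
  finally show ?thesis .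
qed

lemma Sgn_pm: "x \<in> Sgn \<Longrightarrow> x$i = 1 \<or> x$i = -1"
  unfolding Sgn_def by blast

lemma Sgn_sq: "x \<in> Sgn \<Longrightarrow> x$i * x$i = 1"
  using Sgn_pm[of x i] by auto

lemma Sgn_prod: "x \<in> Sgn \<Longrightarrow> x$i * x$j = 1 \<or> x$i * x$j = -1"
  using Sgn_pm[of x i] Sgn_pm[of x j] by auto

lemma outer_GN:
  fixes x :: "real^'n"
  assumes x: "x \<in> Sgn"
  shows "outer x \<in> GN"
proof -
  have "qf (outer x) y = (\<Sum>u\<in>UNIV. x$u * y$u) * (\<Sum>u\<in>UNIV. x$u * y$u)" for y
  proof -
    have "qf (outer x) y = (\<Sum>u\<in>UNIV. (x$u * y$u) * (\<Sum>w\<in>UNIV. x$w * y$w))"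
      unfolding qf_def outer_def sum_distrib_left by (intro sum.cong refl) (simp add: mult_ac)
    also have "\<dots> = (\<Sum>u\<in>UNIV. x$u * y$u) * (\<Sum>u\<in>UNIV. x$u * y$u)"
      by (simp only: sum_distrib_right)
    finally show ?thesis .
  qed
  then have "0 \<le> qf (outer x) y" for y by simp
  then show ?thesis unfolding GN_iff using Sgn_sq[OF x] by (simp add: outer_def mult.commute)
qed

lemma cut_vtx:
  fixes x :: "real^'n"
  assumes x: "x \<in> Sgn"
  shows "vtx (outer x)"
proof -
  define l where "l = (\<lambda>H::real^'n^'n. - (\<Sum>i\<in>UNIV. \<Sum>j\<in>UNIV. x$i * x$j * H$i$j))"
  have lin: "linear l"
    by (rule linearI) (simp_all add: l_def algebra_simps sum.distrib sum_distrib_left)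
  have "1 * norm (G - outer x) \<le> l (G - outer x)" if G: "G \<in> GN" for G
  proof -
    have e: "- (x$i * x$j * (G - outer x)$i$j) = \<bar>(G - outer x)$i$j\<bar>" for i j
    proof -
      have b: "\<bar>G$i$j\<bar> \<le> 1" by (rule GN_bound[OF G])
      have ee: "(G - outer x)$i$j = G$i$j - x$i * x$j" by (simp add: outer_def)
      from Sgn_prod[OF x, of i j] show ?thesis
      proof
        assume h: "x$i * x$j = 1"
        show ?thesis unfolding ee h using b by (auto simp: abs_if)
      next
        assume h: "x$i * x$j = -1"
        show ?thesis unfolding ee h using b by (auto simp: abs_if)
      qed
    qed
    have "l (G - outer x) = bnd (G - outer x)"
      unfolding l_def bnd_def sum_negf[symmetric] e ..
    then show ?thesis using norm_le_bnd[of "G - outer x"] by simp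
  qed
  then show ?thesis unfolding vtx_def using outer_GN[OF x] lin by (metis zero_less_one)
qed

lemma Aut_inv:
  fixes s :: "real^'n^'n \<Rightarrow> real^'n^'n"
  assumes s: "s \<in> Aut"
  shows "extGN (inv_into GN s) \<in> Aut"
    "\<And>G. G \<in> GN \<Longrightarrow> s (extGN (inv_into GN s) G) = G"
    "\<And>G. G \<in> GN \<Longrightarrow> extGN (inv_into GN s) (s G) = G"
    "\<And>G. G \<in> GN \<Longrightarrow> s G \<in> GN"
    "\<And>G. G \<in> GN \<Longrightarrow> extGN (inv_into GN s) G \<in> GN"
proof -
  have b: "bij_betw s GN GN" and aff: "affine_on GN s" using s unfolding Aut_def by simp_all
  have inj: "inj_on s GN" using b by (simp add: bij_betw_def)
  have im: "s ` GN = GN" using b by (simp add: bij_betw_def)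
  show sG: "\<And>G. G \<in> GN \<Longrightarrow> s G \<in> GN" using im by (metis imageI)
  have iG: "\<And>G. G \<in> GN \<Longrightarrow> inv_into GN s G \<in> GN" by (rule inv_into_into) (simp add: im)
  have si: "\<And>G. G \<in> GN \<Longrightarrow> s (inv_into GN s G) = G" by (rule f_inv_into_f) (simp add: im)
  have is': "\<And>G. G \<in> GN \<Longrightarrow> inv_into GN s (s G) = G" using inj by (simp add: inv_into_f_f)
  show "\<And>G. G \<in> GN \<Longrightarrow> s (extGN (inv_into GN s) G) = G" using si by (simp add: extGN_def)
  show "\<And>G. G \<in> GN \<Longrightarrow> extGN (inv_into GN s) (s G) = G" using is' sG by (simp add: extGN_def)
  show "\<And>G. G \<in> GN \<Longrightarrow> extGN (inv_into GN s) G \<in> GN" using iG by (simp add: extGN_def)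
  have affi: "affine_on GN (inv_into GN s)"
    unfolding affine_on_def
  proof (intro ballI allI impI)
    fix x y :: "real^'n^'n" and t :: real assume xy: "x \<in> GN" "y \<in> GN" and t: "0 \<le> t \<and> t \<le> 1"
    let ?z = "(1 - t) *\<^sub>R inv_into GN s x + t *\<^sub>R inv_into GN s y"
    have z: "?z \<in> GN" using convex_GN[OF iG[OF xy(1)] iG[OF xy(2)]] t by simp
    have "s ?z = (1 - t) *\<^sub>R s (inv_into GN s x) + t *\<^sub>R s (inv_into GN s y)"
      by (rule aff[unfolded affine_on_def, rule_format]) (use iG xy t in simp_all)
    also have "\<dots> = (1 - t) *\<^sub>R x + t *\<^sub>R y" using si xy by simp
    finally have "inv_into GN s ((1 - t) *\<^sub>R x + t *\<^sub>R y) = inv_into GN s (s ?z)" by simp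
    also have "\<dots> = ?z" using is' z by simp
    finally show "inv_into GN s ((1 - t) *\<^sub>R x + t *\<^sub>R y) = ?z" .
  qed
  show "extGN (inv_into GN s) \<in> Aut"
    by (rule extGN_Aut[where g=s]) (simp_all add: iG sG is' si affi)
qed

lemma Aut_aff: "s \<in> Aut \<Longrightarrow> affine_on GN s" unfolding Aut_def by auto
lemma Aut_inj: "s \<in> Aut \<Longrightarrow> inj_on s GN" unfolding Aut_def bij_betw_def by auto

lemma vtx_Aut:
  fixes s :: "real^'n^'n \<Rightarrow> real^'n^'n"
  assumes s: "s \<in> Aut" and v: "vtx p"
  shows "vtx (s p)"
proof -
  let ?t = "extGN (inv_into GN s)"
  note ti = Aut_inv[OF s]
  from v obtain l c where p: "p \<in> GN" and lin: "linear l" and c: "c > 0"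
    and lc: "\<forall>G\<in>GN. c * norm (G - p) \<le> l (G - p)" unfolding vtx_def by blast
  have affs: "affine_on GN s" using s by (rule Aut_aff)
  have afft: "affine_on GN ?t" using ti(1) by (rule Aut_aff)
  have "bounded_linear (Lf s)" using Lf_linear[OF affs] linear_conv_bounded_linear by blast
  then obtain B where B: "B > 0" "\<And>X. norm (Lf s X) \<le> norm X * B"
    using bounded_linear.pos_bounded by blast
  define l' where "l' = l \<circ> Lf ?t"
  have lin': "linear l'" unfolding l'_def using lin Lf_linear[OF afft] by (simp add: linear_compose)
  have sp: "s p \<in> GN" using ti(4)[OF p] .
  have "(c / B) * norm (Y - s p) \<le> l' (Y - s p)" if Y: "Y \<in> GN" for Y
  proof -
    let ?G = "?t Y"
    have G: "?G \<in> GN" using ti(5)[OF Y] .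
    have sG: "s ?G = Y" using ti(2)[OF Y] .
    have "Y - s p = Lf s (?G - mat 1) - Lf s (p - mat 1)"
      using Lf_rep[OF affs G] Lf_rep[OF affs p] sG by (metis add_diff_cancel_left)
    also have "\<dots> = Lf s (?G - p)" using Lf_linear[OF affs] by (simp add: linear_diff)
    finally have e1: "Y - s p = Lf s (?G - p)" .
    have tsp: "?t (s p) = p" using ti(3)[OF p] .
    have "?G - p = Lf ?t (Y - mat 1) - Lf ?t (s p - mat 1)"
      using Lf_rep[OF afft Y] Lf_rep[OF afft sp] tsp by (metis add_diff_cancel_left)
    also have "\<dots> = Lf ?t (Y - s p)" using Lf_linear[OF afft] by (simp add: linear_diff)
    finally have e2: "l' (Y - s p) = l (?G - p)" unfolding l'_def by simp
    have "(c / B) * norm (Y - s p) \<le> (c / B) * (norm (?G - p) * B)"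
      using B c e1 by (intro mult_left_mono) auto
    also have "\<dots> = c * norm (?G - p)" using B by simp
    also have "\<dots> \<le> l (?G - p)" using lc G by blast
    finally show ?thesis using e2 by simp
  qed
  then show ?thesis unfolding vtx_def using sp lin' c B by (metis divide_pos_pos)
qed

definition ev :: "'n \<Rightarrow> real^'n" where "ev i = (\<chi> u. if u = i then 1 else 0)"
definition op2 :: "real^'n \<Rightarrow> real^'n \<Rightarrow> real^'n^'n" where "op2 u v = (\<chi> a b. u$a * v$b)"

lemma ev_nth: "ev i $ u = (if u = i then 1 else 0)" by (simp add: ev_def)

lemma inner_ev: "ev i \<bullet> y = y$i" "y \<bullet> ev i = y$i"
proof -
  have "ev i \<bullet> y = (\<Sum>u\<in>UNIV. if u = i then y$u else 0)"
    unfolding inner_vec_def by (intro sum.cong) (auto simp: ev_def)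
  then show "ev i \<bullet> y = y$i" by simp
  then show "y \<bullet> ev i = y$i" by (simp add: inner_commute)
qed

lemma mv_ev: "(G *v ev k) $ u = G$u$k"
proof -
  have "(G *v ev k) $ u = (\<Sum>w\<in>UNIV. if w = k then G$u$w else 0)"
    unfolding matrix_vector_mult_def by (simp add: ev_def if_distrib cong: if_cong)
  then show ?thesis by simp
qed

lemma op2_mv: "op2 u v *v y = (v \<bullet> y) *\<^sub>R u"
  by (simp add: op2_def matrix_vector_mult_def inner_vec_def vec_eq_iff sum_distrib_left mult_ac)

lemma GN_transpose: "G \<in> GN \<Longrightarrow> transpose G = G" by (simp add: GN_def)

lemma sym_inner:
  assumes "G \<in> GN"
  shows "(G *v u) \<bullet> v = u \<bullet> (G *v v)"
proof -
  have "G *v u = u v* G" using vector_transpose_matrix[of u G] GN_transpose[OF assms] by simp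
  then show ?thesis by (simp add: dot_lmul_matrix)
qed

lemma qf_inner: "qf G y = y \<bullet> (G *v y)" by (simp add: inner_mv_qf)

lemma curve:
  fixes p :: "real^'n^'n"
  assumes p: "p \<in> GN" and ik: "i \<noteq> k" and lt: "\<bar>p$i$k\<bar> < 1"
  shows "\<exists>Ar Dd. Dd \<noteq> 0 \<and> (\<forall>b. \<bar>b\<bar> \<le> 1 \<longrightarrow> p + (sqrt (1 - b\<^sup>2) - 1) *\<^sub>R Ar + b *\<^sub>R Dd \<in> GN)"
proof -
  define \<beta> where "\<beta> = p$i$k"
  have bpos: "1 - \<beta> * \<beta> > 0"
  proof -
    have "-1 < \<beta>" "\<beta> < 1" using lt unfolding \<beta>_def by (simp_all add: abs_less_iff)
    then have "0 < (1 - \<beta>) * (1 + \<beta>)" by (intro mult_pos_pos) simp_all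
    then show ?thesis by (simp add: algebra_simps)
  qed
  define \<alpha> where "\<alpha> = 1 / sqrt (1 - \<beta> * \<beta>)"
  have apos: "\<alpha> > 0" using bpos by (simp add: \<alpha>_def)
  have asq: "\<alpha> * \<alpha> * (1 - \<beta> * \<beta>) = 1"
    using bpos by (simp add: \<alpha>_def)
  define e where "e = ev i"
  define f where "f = ev k"
  define c where "c = \<alpha> *\<^sub>R (f - \<beta> *\<^sub>R e)"
  define d where "d = p *v c"
  define r where "r = p *v e - e"
  have pii: "p$i$i = 1" "p$k$k = 1" using GN_diag[OF p] by auto
  have pki: "p$k$i = \<beta>" using GN_sym[OF p, of k i] by (simp add: \<beta>_def)
  have dcomp: "d$u = \<alpha> * (p$u$k - \<beta> * p$u$i)" for u
    by (simp add: d_def c_def f_def e_def algebra_simps mv_ev)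
  have di: "d$i = 0" using dcomp[of i] pii by (simp add: \<beta>_def)
  have dk: "d$k = \<alpha> * (1 - \<beta> * \<beta>)" using dcomp[of k] pii pki by simp
  have ci: "c$i = - \<alpha> * \<beta>" using ik by (simp add: c_def f_def e_def ev_def)
  have cd: "c \<bullet> d = 1"
  proof -
    have "c \<bullet> d = \<alpha> * (d$k - \<beta> * d$i)"
      by (simp add: c_def f_def e_def inner_diff_left inner_ev)
    also have "\<dots> = 1" using di dk asq by (simp add: mult_ac)
    finally show ?thesis .
  qed
  have ri: "r$i = 0" using pii by (simp add: r_def e_def mv_ev ev_nth)
  have cr: "c \<bullet> r = - c$i"
  proof -
    have "c \<bullet> (p *v e) = (p *v c) \<bullet> e" using sym_inner[OF p, of c e] by simp
    then have "c \<bullet> (p *v e) = d$i" by (simp add: d_def e_def inner_ev)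
    then show ?thesis using di by (simp add: r_def inner_diff_right e_def inner_ev)
  qed
  define Ar where "Ar = op2 e r + op2 r e"
  define Dd where "Dd = op2 e d + op2 d e"
  have Dd_ne: "Dd \<noteq> 0"
  proof
    assume "Dd = 0"
    then have "Dd$i$k = 0" by simp
    moreover have "Dd$i$k = d$k" using ik di by (simp add: Dd_def op2_def e_def ev_def)
    ultimately show False using dk apos bpos by simp
  qed
  have "p + (sqrt (1 - b\<^sup>2) - 1) *\<^sub>R Ar + b *\<^sub>R Dd \<in> GN" if b: "\<bar>b\<bar> \<le> 1" for b
  proof -
    define a where "a = sqrt (1 - b\<^sup>2)"
    have bb: "b * b \<le> 1"
    proof -
      have "\<bar>b\<bar> * \<bar>b\<bar> \<le> 1 * 1" using b by (intro mult_mono) auto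
      then show ?thesis by (simp add: abs_mult_self_eq)
    qed
    have asq2: "a * a = 1 - b * b"
      using bb by (simp add: a_def power2_eq_square)
    define m where "m = (a - 1) *\<^sub>R r + b *\<^sub>R d"
    define w where "w = (a - 1) *\<^sub>R e + b *\<^sub>R c"
    define Gb where "Gb = p + op2 e m + op2 m e"
    have mi: "m$i = 0" using ri di by (simp add: m_def)
    have Gb_eq: "Gb = p + (a - 1) *\<^sub>R Ar + b *\<^sub>R Dd"
      by (simp add: Gb_def Ar_def Dd_def m_def op2_def vec_eq_iff algebra_simps)
    have pe: "p *v e = r + e" by (simp add: r_def)
    have pw: "p *v w = m + (a - 1) *\<^sub>R e"
      by (simp add: w_def m_def algebra_simps pe d_def[symmetric])
    have em: "e \<bullet> m = 0" using mi by (simp add: e_def inner_ev)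
    have cm: "c \<bullet> m = - (a - 1) * c$i + b"
      by (simp add: m_def inner_add_right cr cd algebra_simps)
    have we: "w \<bullet> e = (a - 1) + b * c$i"
      by (simp add: w_def inner_add_left e_def inner_ev ev_nth)
    have wm: "w \<bullet> m = b * (c \<bullet> m)"
      using em by (simp add: w_def inner_add_left)
    have wpw: "w \<bullet> (p *v w) = b * b + (a - 1) * (a - 1)"
    proof -
      have "w \<bullet> (p *v w) = w \<bullet> m + (a - 1) * (w \<bullet> e)" by (simp add: pw inner_add_right)
      also have "\<dots> = b * b + (a - 1) * (a - 1)" unfolding wm cm we by (simp add: algebra_simps)
      finally show ?thesis .
    qed
    have psd: "0 \<le> qf Gb y" for y
    proof -
      define t where "t = y$i"
      define z where "z = y + t *\<^sub>R w"
      have 1: "y \<bullet> (p *v w) = m \<bullet> y + (a - 1) * t"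
        by (simp add: pw inner_add_right inner_commute t_def e_def inner_ev)
      have 2: "w \<bullet> (p *v y) = m \<bullet> y + (a - 1) * t"
        using sym_inner[OF p, of w y] 1 by (simp add: pw inner_add_left inner_commute t_def e_def inner_ev)
      have "qf p z = y \<bullet> (p *v y) + t * (y \<bullet> (p *v w)) + t * (w \<bullet> (p *v y)) + t * t * (w \<bullet> (p *v w))"
        by (simp add: qf_inner z_def algebra_simps inner_add_left inner_add_right)
      also have "\<dots> = y \<bullet> (p *v y) + 2 * t * (m \<bullet> y) + t * t * (a * a + b * b - 1)"
        unfolding 1 2 wpw by (simp add: algebra_simps)
      also have "\<dots> = y \<bullet> (p *v y) + 2 * t * (m \<bullet> y)" using asq2 by simp
      also have "\<dots> = qf Gb y"
        by (simp add: qf_inner Gb_def algebra_simps op2_mv inner_add_right t_def e_def inner_ev inner_commute)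
      finally show ?thesis using GN_psd[OF p, of z] by simp
    qed
    have symm: "Gb$u$v = Gb$v$u" for u v
      using GN_sym[OF p, of u v] by (simp add: Gb_def op2_def mult_ac)
    have diag: "Gb$u$u = 1" for u
      using GN_diag[OF p, of u] mi by (cases "u = i") (auto simp: Gb_def op2_def e_def ev_def)
    have "Gb \<in> GN" unfolding GN_iff using psd symm diag by blast
    then show ?thesis using Gb_eq a_def by simp
  qed
  then show ?thesis using Dd_ne by blast
qed

lemma sqrt_ge_self: "0 \<le> x \<Longrightarrow> x \<le> 1 \<Longrightarrow> x \<le> sqrt x"
proof -
  assume x: "0 \<le> x" "x \<le> 1"
  have s1: "sqrt x \<le> 1" using x by simp
  have "x = sqrt x * sqrt x" using x by simp
  also have "\<dots> \<le> sqrt x * 1" using s1 x by (intro mult_left_mono) auto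
  finally show ?thesis by simp
qed

lemma nonvtx:
  fixes p :: "real^'n^'n"
  assumes p: "p \<in> GN" and ik: "i \<noteq> k" and lt: "\<bar>p$i$k\<bar> < 1"
  shows "\<not> vtx p"
proof
  assume "vtx p"
  then obtain l c where lin: "linear l" and c: "c > 0"
    and lc: "\<forall>G\<in>GN. c * norm (G - p) \<le> l (G - p)" unfolding vtx_def by blast
  obtain Ar Dd where Dd: "Dd \<noteq> 0" and cv: "\<And>b. \<bar>b\<bar> \<le> 1 \<Longrightarrow> p + (sqrt (1 - b\<^sup>2) - 1) *\<^sub>R Ar + b *\<^sub>R Dd \<in> GN"
    using curve[OF p ik lt] by blast
  define K where "K = \<bar>l Ar\<bar>"
  have nD: "norm Dd > 0" using Dd by simp
  have key: "c * norm Dd \<le> b * K" if b: "0 < b" "b \<le> 1" for b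
  proof -
    define a where "a = sqrt (1 - b\<^sup>2)"
    have b2: "b\<^sup>2 \<le> 1" using b by (simp add: power_le_one)
    have a1: "1 - a \<le> b\<^sup>2" using sqrt_ge_self[of "1 - b\<^sup>2"] b2 b by (simp add: a_def)
    have a1': "a \<le> 1" using b2 by (simp add: a_def)
    have Gp: "p + (a - 1) *\<^sub>R Ar + b *\<^sub>R Dd \<in> GN" using cv[of b] b by (simp add: a_def)
    have Gm: "p + (a - 1) *\<^sub>R Ar + (- b) *\<^sub>R Dd \<in> GN" using cv[of "-b"] b by (simp add: a_def)
    have lsum: "l (x *\<^sub>R Ar + y *\<^sub>R Dd) = x * l Ar + y * l Dd" for x y
      using lin by (simp add: linear_add linear_scale)
    have l1: "c * norm ((a - 1) *\<^sub>R Ar + b *\<^sub>R Dd) \<le> (a - 1) * l Ar + b * l Dd"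
    proof -
      have "c * norm ((p + (a - 1) *\<^sub>R Ar + b *\<^sub>R Dd) - p) \<le> l ((p + (a - 1) *\<^sub>R Ar + b *\<^sub>R Dd) - p)"
        using lc Gp by blast
      then show ?thesis by (simp add: lsum)
    qed
    have l2: "c * norm ((a - 1) *\<^sub>R Ar - b *\<^sub>R Dd) \<le> (a - 1) * l Ar - b * l Dd"
    proof -
      have "c * norm ((p + (a - 1) *\<^sub>R Ar + (- b) *\<^sub>R Dd) - p) \<le> l ((p + (a - 1) *\<^sub>R Ar + (- b) *\<^sub>R Dd) - p)"
        using lc Gm by blast
      moreover have "(p + (a - 1) *\<^sub>R Ar + (- b) *\<^sub>R Dd) - p = (a - 1) *\<^sub>R Ar + (- b) *\<^sub>R Dd" by simp
      moreover have "(a - 1) *\<^sub>R Ar + (- b) *\<^sub>R Dd = (a - 1) *\<^sub>R Ar - b *\<^sub>R Dd" by simp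
      ultimately show ?thesis using lsum[of "a - 1" "- b"] by simp
    qed
    have tri: "norm ((2 * b) *\<^sub>R Dd) \<le> norm ((a - 1) *\<^sub>R Ar + b *\<^sub>R Dd) + norm ((a - 1) *\<^sub>R Ar - b *\<^sub>R Dd)"
    proof -
      have "(2 * b) *\<^sub>R Dd = ((a - 1) *\<^sub>R Ar + b *\<^sub>R Dd) - ((a - 1) *\<^sub>R Ar - b *\<^sub>R Dd)"
        by (simp add: vec_eq_iff algebra_simps)
      then show ?thesis by (metis norm_triangle_ineq4)
    qed
    have "c * (2 * b * norm Dd) \<le> 2 * ((a - 1) * l Ar)"
    proof -
      have "c * (2 * b * norm Dd) \<le> c * (norm ((a - 1) *\<^sub>R Ar + b *\<^sub>R Dd) + norm ((a - 1) *\<^sub>R Ar - b *\<^sub>R Dd))"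
        using tri c b by (intro mult_left_mono) auto
      also have "\<dots> \<le> 2 * ((a - 1) * l Ar)" using l1 l2 by (simp add: algebra_simps)
      finally show ?thesis .
    qed
    also have "(a - 1) * l Ar \<le> (1 - a) * K"
    proof -
      have "(a - 1) * l Ar = - ((1 - a) * l Ar)" by (simp add: algebra_simps)
      also have "\<dots> \<le> (1 - a) * K" unfolding K_def using a1'
        by (metis abs_ge_minus_self abs_mult abs_of_nonneg diff_ge_0_iff_ge minus_mult_right mult_left_mono)
      finally show ?thesis .
    qed
    also have "(1 - a) * K \<le> b\<^sup>2 * K" using a1 by (intro mult_right_mono) (auto simp: K_def)
    finally have "c * (2 * b * norm Dd) \<le> 2 * (b\<^sup>2 * K)" by simp
    then have "b * (c * norm Dd) \<le> b * (b * K)" by (simp add: power2_eq_square algebra_simps)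
    then show ?thesis using b by simp
  qed
  define b where "b = min 1 (c * norm Dd / (2 * (K + 1)))"
  have K0: "K \<ge> 0" by (simp add: K_def)
  have bpos: "0 < b" using c nD K0 by (simp add: b_def)
  have b1: "b \<le> 1" by (simp add: b_def)
  have "b * K \<le> (c * norm Dd / (2 * (K + 1))) * K" using K0 by (intro mult_right_mono) (auto simp: b_def)
  also have "\<dots> < c * norm Dd"
  proof -
    have "(c * norm Dd / (2 * (K + 1))) * K = c * norm Dd * (K / (2 * (K + 1)))" by simp
    also have "K / (2 * (K + 1)) < 1" using K0 by simp
    then have "c * norm Dd * (K / (2 * (K + 1))) < c * norm Dd * 1" using c nD by (intro mult_strict_left_mono) auto
    finally show ?thesis by simp
  qed
  finally show False using key[OF bpos b1] by simp
qed

lemma qf_three: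
  assumes d: "i \<noteq> j" "i \<noteq> a" "j \<noteq> a" and y: "\<And>u. u \<noteq> i \<Longrightarrow> u \<noteq> j \<Longrightarrow> u \<noteq> a \<Longrightarrow> y$u = 0"
  shows "qf G y = (\<Sum>u\<in>{i,j,a}. \<Sum>w\<in>{i,j,a}. y$u * G$u$w * y$w)"
  by (rule qf_supp) (use y in auto)

lemma all_one_cut:
  fixes p :: "real^'n^'n"
  assumes p: "p \<in> GN" and one: "\<And>i k. \<not> \<bar>p$i$k\<bar> < 1"
  shows "p \<in> outer ` Sgn"
proof -
  have abs1: "\<bar>p$i$k\<bar> = 1" for i k using one[of i k] GN_bound[OF p, of i k] by linarith
  have pm: "p$i$k = 1 \<or> p$i$k = -1" for i k using abs1[of i k] by (auto simp: abs_if split: if_splits)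
  define a0 :: 'n where "a0 = undefined"
  define x where "x = (\<chi> j. p$a0$j)"
  have xS: "x \<in> Sgn" unfolding Sgn_def x_def using pm by simp
  have xa: "x$a0 = 1" using GN_diag[OF p] by (simp add: x_def)
  have ent: "p$i$j = x$i * x$j" for i j
  proof (cases "i = j")
    case True then show ?thesis using GN_diag[OF p, of i] Sgn_sq[OF xS, of i] by simp
  next
    case ij: False
    show ?thesis
    proof (cases "i = a0")
      case True then show ?thesis using xa by (simp add: x_def)
    next
      case ia: False
      show ?thesis
      proof (cases "j = a0")
        case True then show ?thesis using xa GN_sym[OF p, of i a0] by (simp add: x_def)
      next
        case ja: False
        define y where "y = (\<chi> u. if u = i then x$i else if u = j then x$j else if u = a0 then -1 else (0::real))"
        have yv: "y$i = x$i" "y$j = x$j" "y$a0 = -1" using ij ia ja by (auto simp: y_def)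
        have "qf p y = (\<Sum>u\<in>{i,j,a0}. \<Sum>w\<in>{i,j,a0}. y$u * p$u$w * y$w)"
          by (rule qf_three[OF ij ia ja]) (simp add: y_def)
        also have "\<dots> = y$i * p$i$i * y$i + y$i * p$i$j * y$j + y$i * p$i$a0 * y$a0
           + (y$j * p$j$i * y$i + y$j * p$j$j * y$j + y$j * p$j$a0 * y$a0)
           + (y$a0 * p$a0$i * y$i + y$a0 * p$a0$j * y$j + y$a0 * p$a0$a0 * y$a0)"
          using ij ia ja by (simp add: sum.insert algebra_simps)
        also have "\<dots> = 2 * (x$i * x$j * p$i$j) - 1"
          using GN_diag[OF p, of i] GN_diag[OF p, of j] GN_diag[OF p, of a0]
            GN_sym[OF p, of i j] GN_sym[OF p, of i a0] GN_sym[OF p, of j a0]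
            Sgn_sq[OF xS, of i] Sgn_sq[OF xS, of j]
          unfolding yv by (simp add: x_def algebra_simps)
        finally have "0 \<le> 2 * (x$i * x$j * p$i$j) - 1" using GN_psd[OF p, of y] by simp
        then show ?thesis using pm[of i j] Sgn_pm[OF xS, of i] Sgn_pm[OF xS, of j] by auto
      qed
    qed
  qed
  have "p = outer x" by (simp add: vec_eq_iff outer_def ent)
  then show ?thesis using xS by blast
qed

lemma vtx_iff:
  fixes p :: "real^'n^'n"
  assumes p: "p \<in> GN"
  shows "vtx p \<longleftrightarrow> p \<in> outer ` Sgn"
proof
  assume v: "vtx p"
  show "p \<in> outer ` Sgn"
  proof (rule all_one_cut[OF p])
    fix i k
    show "\<not> \<bar>p$i$k\<bar> < 1"
    proof
      assume lt: "\<bar>p$i$k\<bar> < 1"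
      then have "i \<noteq> k" using GN_diag[OF p] by auto
      from nonvtx[OF p this lt] v show False by simp
    qed
  qed
next
  assume "p \<in> outer ` Sgn"
  then show "vtx p" using cut_vtx by blast
qed

definition flip :: "'n \<Rightarrow> real^'n \<Rightarrow> real^'n" where
  "flip t x = (\<chi> u. if u = t then - x$u else x$u)"

lemma flip_nth: "flip t x $ u = (if u = t then - x$u else x$u)" by (simp add: flip_def)
lemma flip_flip: "flip t (flip t x) = x" by (simp add: flip_def vec_eq_iff)
lemma flip_Sgn: "x \<in> Sgn \<Longrightarrow> flip t x \<in> Sgn" unfolding Sgn_def flip_def by auto

lemma sum_invol_zero:
  fixes f :: "'a \<Rightarrow> real"
  assumes g: "\<And>x. x \<in> X \<Longrightarrow> g x \<in> X" "\<And>x. x \<in> X \<Longrightarrow> g (g x) = x"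
    and fg: "\<And>x. x \<in> X \<Longrightarrow> f (g x) = - f x"
  shows "sum f X = 0"
proof -
  have "sum f X = sum (\<lambda>x. f (g x)) X"
    by (rule sum.reindex_bij_witness[where i=g and j=g]) (use g in auto)
  also have "\<dots> = - sum f X" using fg by (simp add: sum_negf)
  finally show ?thesis by simp
qed

lemma finite_Sgn: "finite (Sgn :: (real^'n) set)"
proof -
  have "Sgn \<subseteq> vec_lambda ` (PiE (UNIV :: 'n set) (\<lambda>_. {-1, 1::real}))"
  proof
    fix x :: "real^'n" assume x: "x \<in> Sgn"
    have "(\<lambda>i. x$i) \<in> PiE UNIV (\<lambda>_. {-1, 1::real})" using x unfolding Sgn_def by auto
    moreover have "x = vec_lambda (\<lambda>i. x$i)" by simp
    ultimately show "x \<in> vec_lambda ` (PiE (UNIV :: 'n set) (\<lambda>_. {-1, 1::real}))" by blast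
  qed
  moreover have "finite (PiE (UNIV :: 'n set) (\<lambda>_. {-1, 1::real}))" by (rule finite_PiE) auto
  ultimately show ?thesis using finite_surj by blast
qed

lemma Sgn_ne: "(Sgn :: (real^'n) set) \<noteq> {}"
proof -
  have "(\<chi> u. (1::real)) \<in> (Sgn :: (real^'n) set)" by (simp add: Sgn_def)
  then show ?thesis by blast
qed

lemma outer_neg: "outer (- x) = outer x" by (simp add: outer_def)
lemma Sgn_neg: "x \<in> Sgn \<Longrightarrow> - x \<in> Sgn" unfolding Sgn_def by auto

lemma outer_eq:
  fixes x y :: "real^'n"
  assumes x: "x \<in> Sgn" and y: "y \<in> Sgn" and e: "outer x = outer y"
  shows "y = x \<or> y = - x"
proof -
  fix i0 :: 'n
  have ent: "x$u * x$w = y$u * y$w" for u w using e by (simp add: outer_def vec_eq_iff)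
  define s where "s = x$i0 * y$i0"
  have yu: "y$u = s * x$u" for u
  proof -
    have "y$u = (y$i0 * y$i0) * y$u" using Sgn_sq[OF y, of i0] by simp
    also have "\<dots> = y$i0 * (y$i0 * y$u)" by (simp only: mult.assoc)
    also have "y$i0 * y$u = x$i0 * x$u" by (rule ent[symmetric])
    also have "y$i0 * (x$i0 * x$u) = s * x$u" by (simp add: s_def mult_ac)
    finally show ?thesis .
  qed
  have "s = 1 \<or> s = -1" using Sgn_prod s_def Sgn_pm[OF x, of i0] Sgn_pm[OF y, of i0] by auto
  then show ?thesis using yu by (auto simp: vec_eq_iff)
qed

lemma sum_Sgn_prod: "(\<Sum>x\<in>(Sgn :: (real^'n) set). x$a * x$b :: real) = (if a = b then real (card (Sgn :: (real^'n) set)) else 0)"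

proof (cases "a = b")
  case True then show ?thesis by (simp add: Sgn_sq)
next
  case ab: False
  have "(\<Sum>x\<in>(Sgn :: (real^'n) set). x$a * x$b) = 0"
    by (rule sum_invol_zero[where g="flip a"]) (use ab in \<open>auto simp: flip_Sgn flip_flip flip_nth\<close>)
  then show ?thesis using ab by simp
qed

definition Ah :: "'n \<Rightarrow> 'n \<Rightarrow> real \<Rightarrow> (real^'n) set" where
  "Ah i j s = {x\<in>Sgn. x$i * x$j = s}"

definition Em :: "'n \<Rightarrow> 'n \<Rightarrow> real^'n^'n" where
  "Em i j = (\<chi> u w. if (u = i \<and> w = j) \<or> (u = j \<and> w = i) then 1 else 0)"

lemma card_Ah:
  fixes i j :: "'n::finite"
  assumes ij: "i \<noteq> j" and s: "s = 1 \<or> s = -1"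
  shows "2 * card (Ah i j s) = card (Sgn :: (real^'n) set)"
proof -
  let ?A = "Ah i j s" and ?B = "Sgn - Ah i j s"
  have fin: "finite ?A" "finite ?B" using finite_Sgn by (auto simp: Ah_def)
  have un: "Sgn = ?A \<union> ?B" "?A \<inter> ?B = {}" by (auto simp: Ah_def)
  have "card ?A = card ?B"
  proof (rule bij_betw_same_card[where f="flip i"])
    show "bij_betw (flip i) ?A ?B"
    proof (rule bij_betw_byWitness[where f'="flip i"])
      show "\<forall>a\<in>?A. flip i (flip i a) = a" "\<forall>a\<in>?B. flip i (flip i a) = a" by (simp_all add: flip_flip)
      show "flip i ` ?A \<subseteq> ?B" using ij s by (auto simp: Ah_def flip_Sgn flip_nth)
      show "flip i ` ?B \<subseteq> ?A"
      proof
        fix y assume "y \<in> flip i ` ?B"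
        then obtain x where x: "x \<in> Sgn" "x$i * x$j \<noteq> s" and y: "y = flip i x" by (auto simp: Ah_def)
        have "x$i * x$j = 1 \<or> x$i * x$j = -1" by (rule Sgn_prod[OF x(1)])
        then have "- (x$i * x$j) = s" using x(2) s by auto
        then show "y \<in> ?A" using ij y x(1) by (simp add: Ah_def flip_Sgn flip_nth)
      qed
    qed
  qed
  note cAB = this
  have u: "?A \<union> ?B = Sgn" by (auto simp: Ah_def)
  have "card (Sgn::(real^'n) set) = card ?A + card ?B" using card_Un_disjoint[OF fin un(2)] unfolding u .
  then show ?thesis using cAB by linarith
qed

lemma sum_Ah_prod:
  fixes i j a b :: "'n::finite"
  assumes ij: "i \<noteq> j"
  shows "(\<Sum>x\<in>Ah i j s. x$a * x$b) =
    (if a = b then real (card (Ah i j s)) else if (a = i \<and> b = j) \<or> (a = j \<and> b = i) then s * real (card (Ah i j s)) else 0)"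
proof -
  have fin: "finite (Ah i j s)" using finite_Sgn by (auto simp: Ah_def)
  show ?thesis
  proof (cases "a = b")
    case True then show ?thesis by (simp add: Ah_def Sgn_sq)
  next
    case ab: False
    show ?thesis
    proof (cases "(a = i \<and> b = j) \<or> (a = j \<and> b = i)")
      case True
      then have "x$a * x$b = x$i * x$j" for x :: "real^'n" by (auto simp: mult.commute)
      then have "(\<Sum>x\<in>Ah i j s. x$a * x$b) = (\<Sum>x\<in>Ah i j s. s)" by (simp add: Ah_def)
      then show ?thesis using True ab by simp
    next
      case F: False
      obtain t where t: "t = a \<or> t = b" "t \<noteq> i" "t \<noteq> j" using F ab by blast
      have "(\<Sum>x\<in>Ah i j s. x$a * x$b) = 0"
      proof (rule sum_invol_zero[where g="flip t"])
        fix x assume x: "x \<in> Ah i j s"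
        show "flip t x \<in> Ah i j s" using x t by (simp add: Ah_def flip_Sgn flip_nth)
        show "flip t (flip t x) = x" by (rule flip_flip)
        show "flip t x $ a * flip t x $ b = - (x$a * x$b)" using t ab by (auto simp: flip_nth)
      qed
      then show ?thesis using F ab by auto
    qed
  qed
qed

definition avg :: "(real^'n) set \<Rightarrow> real^'n^'n" where
  "avg S = (1 / real (card S)) *\<^sub>R (\<Sum>x\<in>S. outer x)"


lemma avg_Sgn: "avg (Sgn :: (real^'n) set) = mat 1"
proof -
  have c: "card (Sgn :: (real^'n) set) > 0" using finite_Sgn Sgn_ne by (simp add: card_gt_0_iff)
  show ?thesis using c by (simp add: avg_def vec_eq_iff outer_def sum_Sgn_prod mat_def)
qed

lemma avg_Ah:
  fixes i j :: "'n::finite"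
  assumes ij: "i \<noteq> j" and s: "s = 1 \<or> s = -1"
  shows "avg (Ah i j s) = mat 1 + s *\<^sub>R Em i j"
proof -
  have "card (Ah i j s) > 0" using card_Ah[OF ij s] finite_Sgn Sgn_ne
    by (metis card_gt_0_iff mult_is_0 neq0_conv)
  then show ?thesis using ij by (auto simp: avg_def vec_eq_iff outer_def sum_Ah_prod mat_def Em_def)
qed

lemma qf_outer: "qf (outer y) v = (y \<bullet> v) * (y \<bullet> v)"
proof -
  have "qf (outer y) v = (\<Sum>u\<in>UNIV. (y$u * v$u) * (\<Sum>w\<in>UNIV. y$w * v$w))"
    unfolding qf_def outer_def sum_distrib_left by (intro sum.cong refl) (simp add: mult_ac)
  also have "\<dots> = (y \<bullet> v) * (y \<bullet> v)"
    by (simp only: sum_distrib_right[symmetric] inner_vec_def inner_real_def)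
  finally show ?thesis .
qed

lemma qf_sum: "qf (\<Sum>x\<in>S. M x) v = (\<Sum>x\<in>S. qf (M x) v)"
proof (induction S rule: infinite_finite_induct)
  case (infinite S) then show ?case by (simp add: qf_def)
next
  case empty then show ?case by (simp add: qf_def)
next
  case (insert x F) then show ?case by (simp add: qf_add)
qed

lemma qf_scale: "qf (c *\<^sub>R M) v = c * qf M v"
  by (simp add: qf_def sum_distrib_left mult_ac)

lemma avg_GN:
  assumes S: "S \<subseteq> Sgn" "S \<noteq> {}"
  shows "avg S \<in> GN"
proof -
  have fin: "finite S" using S finite_Sgn finite_subset by blast
  have c: "card S > 0" using fin S by (simp add: card_gt_0_iff)
  have "qf (avg S) v = (1 / real (card S)) * (\<Sum>x\<in>S. (x \<bullet> v) * (x \<bullet> v))" for v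
    by (simp add: avg_def qf_scale qf_sum qf_outer)
  then have psd: "0 \<le> qf (avg S) v" for v by (simp add: sum_nonneg)
  have "avg S $ a $ b = avg S $ b $ a" for a b
    by (simp add: avg_def outer_def mult.commute)
  moreover have "avg S $ a $ a = 1" for a
  proof -
    have "(\<Sum>x\<in>S. x$a * x$a) = (\<Sum>x\<in>S. 1::real)" using S(1) by (intro sum.cong) (auto simp: Sgn_sq)
    then show ?thesis using c by (simp add: avg_def outer_def)
  qed
  ultimately show ?thesis unfolding GN_iff using psd by blast
qed

lemma Aut_avg:
  fixes s :: "real^'n^'n \<Rightarrow> real^'n^'n"
  assumes s: "s \<in> Aut" and S: "S \<subseteq> Sgn" "S \<noteq> {}"
  shows "s (avg S) = (1 / real (card S)) *\<^sub>R (\<Sum>x\<in>S. s (outer x))"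
proof -
  have aff: "affine_on GN s" using s by (rule Aut_aff)
  have lin: "linear (Lf s)" by (rule Lf_linear[OF aff])
  have fin: "finite S" using S finite_Sgn finite_subset by blast
  have c: "card S > 0" using fin S by (simp add: card_gt_0_iff)
  have oG: "x \<in> S \<Longrightarrow> outer x \<in> GN" for x using S outer_GN by blast
  have "(\<Sum>x\<in>S. outer x - mat 1) = (\<Sum>x\<in>S. outer x) - real (card S) *\<^sub>R mat 1"
    by (simp add: sum_subtractf sum_constant_scaleR del: sum_constant)
  then have "avg S - mat 1 = (1 / real (card S)) *\<^sub>R (\<Sum>x\<in>S. outer x - mat 1)"
    using c by (simp add: avg_def scaleR_diff_right)
  then have "s (avg S) = s (mat 1) + (1 / real (card S)) *\<^sub>R (\<Sum>x\<in>S. Lf s (outer x - mat 1))"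
    using Lf_rep[OF aff avg_GN[OF S]] lin by (simp add: linear_scale linear_sum)
  also have "\<dots> = (1 / real (card S)) *\<^sub>R (\<Sum>x\<in>S. s (mat 1) + Lf s (outer x - mat 1))"
    using c by (simp add: sum.distrib scaleR_add_right sum_constant_scaleR del: sum_constant)
  also have "\<dots> = (1 / real (card S)) *\<^sub>R (\<Sum>x\<in>S. s (outer x))"
    using Lf_rep[OF aff oG] by simp
  finally show ?thesis .
qed

lemma Aut_cut:
  fixes s :: "real^'n^'n \<Rightarrow> real^'n^'n"
  assumes s: "s \<in> Aut" and x: "x \<in> Sgn"
  shows "\<exists>y\<in>Sgn. s (outer x) = outer y"
proof -
  have "vtx (outer x)" by (rule cut_vtx[OF x])
  then have "vtx (s (outer x))" by (rule vtx_Aut[OF s])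
  moreover have "s (outer x) \<in> GN" using Aut_inv(4)[OF s outer_GN[OF x]] .
  ultimately show ?thesis using vtx_iff by blast
qed

definition phi :: "(real^'n^'n \<Rightarrow> real^'n^'n) \<Rightarrow> real^'n \<Rightarrow> real^'n" where
  "phi s x = (SOME y. y \<in> Sgn \<and> s (outer x) = outer y \<and> y $ undefined = x $ undefined)"

lemma phi_props:
  fixes s :: "real^'n^'n \<Rightarrow> real^'n^'n"
  assumes s: "s \<in> Aut" and x: "x \<in> Sgn"
  shows "phi s x \<in> Sgn" "s (outer x) = outer (phi s x)" "phi s x $ undefined = x $ undefined"
proof -
  obtain y where y: "y \<in> Sgn" "s (outer x) = outer y" using Aut_cut[OF s x] by blast
  have ex: "\<exists>y. y \<in> Sgn \<and> s (outer x) = outer y \<and> y $ undefined = x $ undefined"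
  proof (cases "y $ undefined = x $ undefined")
    case True then show ?thesis using y by blast
  next
    case False
    have "(- y) $ undefined = x $ undefined"
      using False Sgn_pm[OF y(1), of undefined] Sgn_pm[OF x, of undefined] by auto
    then show ?thesis using y Sgn_neg[OF y(1)] outer_neg[of y] by metis
  qed
  have "phi s x \<in> Sgn \<and> s (outer x) = outer (phi s x) \<and> phi s x $ undefined = x $ undefined"
    unfolding phi_def by (rule someI_ex[OF ex])
  then show "phi s x \<in> Sgn" "s (outer x) = outer (phi s x)" "phi s x $ undefined = x $ undefined"
    by auto
qed

lemma phi_inj:
  fixes s :: "real^'n^'n \<Rightarrow> real^'n^'n"
  assumes s: "s \<in> Aut"
  shows "inj_on (phi s) Sgn"
proof (rule inj_onI)
  fix x y :: "real^'n" assume x: "x \<in> Sgn" and y: "y \<in> Sgn" and e: "phi s x = phi s y"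
  have "s (outer x) = s (outer y)" using phi_props(2)[OF s x] phi_props(2)[OF s y] e by simp
  then have "outer x = outer y" using Aut_inj[OF s] outer_GN[OF x] outer_GN[OF y] by (meson inj_onD)
  then have "y = x \<or> y = - x" by (rule outer_eq[OF x y])
  moreover have "x $ undefined = y $ undefined"
    using phi_props(3)[OF s x] phi_props(3)[OF s y] e by simp
  moreover have "x $ undefined \<noteq> 0" using Sgn_pm[OF x, of undefined] by auto
  ultimately show "x = y" by auto
qed

lemma phi_image:
  fixes s :: "real^'n^'n \<Rightarrow> real^'n^'n"
  assumes s: "s \<in> Aut"
  shows "phi s ` Sgn = Sgn"
  by (rule endo_inj_surj[OF finite_Sgn _ phi_inj[OF s]]) (use phi_props(1)[OF s] in blast)

lemma Aut_avg_phi: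
  fixes s :: "real^'n^'n \<Rightarrow> real^'n^'n"
  assumes s: "s \<in> Aut" and S: "S \<subseteq> Sgn" "S \<noteq> {}"
  shows "s (avg S) = avg (phi s ` S)"
proof -
  have inj: "inj_on (phi s) S" using phi_inj[OF s] S(1) by (rule inj_on_subset)
  have "s (avg S) = (1 / real (card S)) *\<^sub>R (\<Sum>x\<in>S. outer (phi s x))"
    using Aut_avg[OF s S] phi_props(2)[OF s] S(1) by (simp add: subset_iff)
  also have "(\<Sum>x\<in>S. outer (phi s x)) = (\<Sum>y\<in>phi s ` S. outer y)"
    using sum.reindex[OF inj, of outer] by simp
  also have "card S = card (phi s ` S)" using card_image[OF inj] by simp
  finally show ?thesis unfolding avg_def .
qed

lemma Aut_I:
  fixes s :: "real^'n^'n \<Rightarrow> real^'n^'n"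
  assumes s: "s \<in> Aut"
  shows "s (mat 1) = mat 1"
proof -
  have "s (mat 1) = s (avg Sgn)" by (simp only: avg_Sgn)
  also have "\<dots> = avg (phi s ` Sgn)" by (rule Aut_avg_phi[OF s subset_refl Sgn_ne])
  also have "\<dots> = avg Sgn" by (simp only: phi_image[OF s])
  also have "\<dots> = mat 1" by (rule avg_Sgn)
  finally show ?thesis .
qed

definition sing :: "real^'n^'n \<Rightarrow> bool" where
  "sing p \<longleftrightarrow> (\<exists>v. v \<noteq> 0 \<and> qf p v = 0)"

definition ai :: "real^'n^'n \<Rightarrow> bool" where
  "ai p \<longleftrightarrow> (\<forall>q\<in>GN. \<exists>e>0. p + e *\<^sub>R (p - q) \<in> GN)"

lemma qf_vv: "qf (mat 1) v = v \<bullet> v"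
  by (simp add: qf_inner)

lemma qf_diff: "qf (A - B) v = qf A v - qf B v"
  by (simp add: qf_def algebra_simps sum_subtractf)

lemma sing_not_ai:
  assumes p: "p \<in> GN" and sp: "sing p"
  shows "\<not> ai p"
proof
  assume "ai p"
  then obtain e where e: "e > 0" and r: "p + e *\<^sub>R (p - mat 1) \<in> GN" using I_GN unfolding ai_def by blast
  obtain v where v: "v \<noteq> 0" "qf p v = 0" using sp unfolding sing_def by blast
  have "qf (p + e *\<^sub>R (p - mat 1)) v = - e * (v \<bullet> v)"
    using v(2) by (simp add: qf_add qf_scale qf_vv qf_diff)
  moreover have "v \<bullet> v > 0" using v(1) by simp
  ultimately have "qf (p + e *\<^sub>R (p - mat 1)) v < 0" using e by simp
  then show False using GN_psd[OF r] by (simp add: not_le[symmetric])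
qed

lemma qf_scaleV: "qf G (c *\<^sub>R v) = c * c * qf G v"
  by (simp add: qf_def sum_distrib_left mult_ac)

lemma qf_upper:
  fixes q :: "real^'n^'n"
  assumes q: "q \<in> GN"
  shows "qf q v \<le> real CARD('n) * (v \<bullet> v)"
proof -
  have "\<bar>v$u * q$u$w * v$w\<bar> \<le> (v$u * v$u + v$w * v$w) / 2" for u w
  proof -
    have "\<bar>v$u * q$u$w * v$w\<bar> = \<bar>q$u$w\<bar> * (\<bar>v$u\<bar> * \<bar>v$w\<bar>)" by (simp add: abs_mult)
    also have "\<dots> \<le> 1 * (\<bar>v$u\<bar> * \<bar>v$w\<bar>)" by (rule mult_right_mono[OF GN_bound[OF q]]) simp
    also have "\<dots> \<le> (v$u * v$u + v$w * v$w) / 2"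
    proof -
      have "0 \<le> (\<bar>v$u\<bar> - \<bar>v$w\<bar>)^2" by simp
      then show ?thesis by (simp add: power2_eq_square algebra_simps abs_mult_self_eq)
    qed
    finally show ?thesis .
  qed
  note bd = this
  have "qf q v \<le> (\<Sum>u\<in>UNIV. \<Sum>w\<in>UNIV. \<bar>v$u * q$u$w * v$w\<bar>)"
    unfolding qf_def by (rule order_trans[OF abs_ge_self order_trans[OF sum_abs]]) (intro sum_mono sum_abs)
  also have "\<dots> \<le> (\<Sum>u\<in>UNIV. \<Sum>w\<in>UNIV. (v$u * v$u + v$w * v$w) / 2)"
    by (intro sum_mono bd)
  also have "\<dots> = real CARD('n) * (\<Sum>u\<in>UNIV. v$u * v$u)"
    by (simp add: sum.distrib add_divide_distrib sum_divide_distrib[symmetric] sum_distrib_left[symmetric])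
  also have "(\<Sum>u\<in>UNIV. v$u * v$u) = v \<bullet> v" by (simp add: inner_vec_def)
  finally show ?thesis .
qed

lemma pd_bound:
  fixes p :: "real^'n^'n"
  assumes p: "p \<in> GN" and ns: "\<not> sing p"
  shows "\<exists>d>0. \<forall>v. d * (v \<bullet> v) \<le> qf p v"
proof -
  have pos: "v \<noteq> 0 \<Longrightarrow> qf p v > 0" for v
    using ns GN_psd[OF p, of v] unfolding sing_def by force
  have cont: "continuous_on (sphere 0 1) (\<lambda>v::real^'n. v \<bullet> (p *v v))"
    by (intro continuous_intros linear_continuous_on matrix_vector_mul_bounded_linear)
  have ne: "sphere (0::real^'n) 1 \<noteq> {}" by simp
  obtain u where u: "u \<in> sphere 0 1" and umin: "\<forall>y\<in>sphere 0 1. u \<bullet> (p *v u) \<le> y \<bullet> (p *v y)"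
    using continuous_attains_inf[OF compact_sphere ne cont] by blast
  define d where "d = qf p u"
  have "u \<noteq> 0" using u by auto
  then have d: "d > 0" using pos by (simp add: d_def)
  have "d * (v \<bullet> v) \<le> qf p v" for v
  proof (cases "v = 0")
    case True then show ?thesis by (simp add: qf_def)
  next
    case False
    define w where "w = (1 / norm v) *\<^sub>R v"
    have w: "w \<in> sphere 0 1" using False by (simp add: w_def)
    have "d \<le> qf p w" using umin w by (simp add: d_def qf_inner)
    have vw: "v = norm v *\<^sub>R w" using False by (simp add: w_def)
    have "qf p v = norm v * norm v * qf p w" by (subst vw) (rule qf_scaleV)
    moreover have "v \<bullet> v = norm v * norm v" by (simp add: dot_square_norm power2_eq_square)
    moreover have "d * (norm v * norm v) \<le> qf p w * (norm v * norm v)"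
      using \<open>d \<le> qf p w\<close> by (intro mult_right_mono) simp_all
    ultimately show ?thesis by (simp add: mult_ac)
  qed
  then show ?thesis using d by blast
qed

lemma pd_ai:
  fixes p :: "real^'n^'n"
  assumes p: "p \<in> GN" and ns: "\<not> sing p"
  shows "ai p"
  unfolding ai_def
proof
  fix q :: "real^'n^'n" assume q: "q \<in> GN"
  obtain d where d: "d > 0" and dp: "\<And>v. d * (v \<bullet> v) \<le> qf p v" using pd_bound[OF p ns] by blast
  let ?N = "real CARD('n)"
  have N: "?N > 0" by simp
  define e where "e = d / ?N"
  have e: "e > 0" using d N by (simp add: e_def)
  have "p + e *\<^sub>R (p - q) \<in> GN"
  proof -
    let ?r = "p + e *\<^sub>R (p - q)"
    have "0 \<le> qf ?r v" for v
    proof -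
      have eq: "qf ?r v = (1 + e) * qf p v - e * qf q v"
        by (simp add: qf_def algebra_simps sum_subtractf sum.distrib sum_distrib_left)
      have "e * qf q v \<le> e * (?N * (v \<bullet> v))" using qf_upper[OF q, of v] e by (simp add: mult_left_mono)
      also have "\<dots> = d * (v \<bullet> v)" using N by (simp add: e_def)
      also have "\<dots> \<le> qf p v" by (rule dp)
      finally have "e * qf q v \<le> qf p v" .
      moreover have "0 \<le> e * qf p v" using e GN_psd[OF p, of v] by simp
      ultimately show ?thesis unfolding eq by (simp add: algebra_simps)
    qed
    moreover have "\<forall>u w. ?r$u$w = ?r$w$u" using GN_sym[OF p] GN_sym[OF q] by simp
    moreover have "\<forall>u. ?r$u$u = 1" using GN_diag[OF p] GN_diag[OF q] by simp
    ultimately show ?thesis unfolding GN_iff by blast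
  qed
  then show "\<exists>e>0. p + e *\<^sub>R (p - q) \<in> GN" using e by blast
qed

lemma ai_transfer:
  fixes s :: "real^'n^'n \<Rightarrow> real^'n^'n"
  assumes s: "s \<in> Aut" and p: "p \<in> GN" and a: "ai (s p)"
  shows "ai p"
  unfolding ai_def
proof
  fix q :: "real^'n^'n" assume q: "q \<in> GN"
  let ?t = "extGN (inv_into GN s)"
  note ti = Aut_inv[OF s]
  have sq: "s q \<in> GN" using ti(4)[OF q] .
  obtain e where e: "e > 0" and r: "s p + e *\<^sub>R (s p - s q) \<in> GN" using a sq unfolding ai_def by blast
  let ?r = "s p + e *\<^sub>R (s p - s q)"
  have afft: "affine_on GN ?t" using ti(1) by (rule Aut_aff)
  define lm where "lm = 1 / (1 + e)"
  have lm: "lm * (1 + e) = 1" using e by (simp add: lm_def)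
  have lm1: "1 - e / (1 + e) = lm" "e / (1 + e) = e * lm" using e by (simp_all add: lm_def field_simps)
  have comb: "lm *\<^sub>R ?r + (e * lm) *\<^sub>R s q = s p"
  proof -
    have "lm *\<^sub>R ?r + (e * lm) *\<^sub>R s q = (lm * (1 + e)) *\<^sub>R s p" by (simp add: algebra_simps)
    then show ?thesis using lm by simp
  qed
  have el: "0 \<le> e * lm" "e * lm \<le> 1" "1 - e * lm = lm" using e lm by (simp_all add: lm_def field_simps)
  have "?t ((1 - e * lm) *\<^sub>R ?r + (e * lm) *\<^sub>R s q) = (1 - e * lm) *\<^sub>R ?t ?r + (e * lm) *\<^sub>R ?t (s q)"
    by (rule afft[unfolded affine_on_def, rule_format]) (use r sq el in auto)
  then have "?t (s p) = lm *\<^sub>R ?t ?r + (e * lm) *\<^sub>R ?t (s q)" unfolding el(3) comb .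
  then have pe: "p = lm *\<^sub>R ?t ?r + (e * lm) *\<^sub>R q" using ti(3)[OF p] ti(3)[OF q] by simp
  have "(1 + e) *\<^sub>R p = (1 + e) *\<^sub>R (lm *\<^sub>R ?t ?r + (e * lm) *\<^sub>R q)" using pe by simp
  also have "\<dots> = (lm * (1 + e)) *\<^sub>R ?t ?r + (lm * (1 + e) * e) *\<^sub>R q" by (simp add: algebra_simps)
  also have "\<dots> = ?t ?r + e *\<^sub>R q" using lm by simp
  finally have "?t ?r = p + e *\<^sub>R (p - q)" by (simp add: algebra_simps)
  moreover have "?t ?r \<in> GN" using ti(5)[OF r] .
  ultimately show "\<exists>e>0. p + e *\<^sub>R (p - q) \<in> GN" using e by auto
qed

lemma sing_transfer:
  fixes s :: "real^'n^'n \<Rightarrow> real^'n^'n"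
  assumes s: "s \<in> Aut" and p: "p \<in> GN" and sp: "sing p"
  shows "sing (s p)"
proof (rule ccontr)
  assume "\<not> sing (s p)"
  then have "ai (s p)" using pd_ai Aut_inv(4)[OF s p] by blast
  then have "ai p" by (rule ai_transfer[OF s p])
  then show False using sing_not_ai[OF p sp] by simp
qed

lemma flip_alt: "flip t y = y - (2 * y$t) *\<^sub>R ev t"
  by (simp add: vec_eq_iff flip_nth ev_nth)

lemma inner_flip: "v \<bullet> flip t y = v \<bullet> y - 2 * v$t * y$t"
  by (simp add: flip_alt inner_diff_right inner_ev)

lemma LO_half:
  fixes v :: "real^'n"
  assumes vt: "v$t \<noteq> 0" and Z: "Z = {y\<in>Sgn. v \<bullet> y = 0}"
  shows "2 * card Z \<le> card (Sgn :: (real^'n) set)"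
    and "2 * card Z = card (Sgn :: (real^'n) set) \<Longrightarrow> y \<in> Sgn \<Longrightarrow> y \<notin> Z \<Longrightarrow> flip t y \<in> Z"
proof -
  have finZ: "finite Z" using finite_Sgn Z by auto
  have finB: "finite (Sgn - Z)" using finite_Sgn by auto
  have sub: "flip t ` Z \<subseteq> Sgn - Z"
  proof
    fix w assume "w \<in> flip t ` Z"
    then obtain y where y: "y \<in> Z" and w: "w = flip t y" by blast
    have yS: "y \<in> Sgn" and y0: "v \<bullet> y = 0" using y Z by auto
    have "y$t \<noteq> 0" using Sgn_pm[OF yS, of t] by auto
    then have "v \<bullet> w \<noteq> 0" using vt y0 by (simp add: w inner_flip)
    then show "w \<in> Sgn - Z" using Z w flip_Sgn[OF yS] by auto
  qed
  have inj: "inj_on (flip t) Z" by (metis flip_flip inj_onI)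
  have c1: "card Z = card (flip t ` Z)" using card_image[OF inj] by simp
  have c2: "card (flip t ` Z) \<le> card (Sgn - Z)" by (rule card_mono[OF finB sub])
  have c3: "card (Sgn :: (real^'n) set) = card Z + card (Sgn - Z)"
  proof -
    have "Z \<union> (Sgn - Z) = Sgn" using Z by auto
    moreover have "card (Z \<union> (Sgn - Z)) = card Z + card (Sgn - Z)"
      by (rule card_Un_disjoint[OF finZ finB]) auto
    ultimately show ?thesis by simp
  qed
  show "2 * card Z \<le> card (Sgn :: (real^'n) set)" using c1 c2 c3 by linarith
  assume eq: "2 * card Z = card (Sgn :: (real^'n) set)" and y: "y \<in> Sgn" "y \<notin> Z"
  have "card (flip t ` Z) = card (Sgn - Z)" using c1 c3 eq by linarith
  then have "flip t ` Z = Sgn - Z" by (rule card_subset_eq[OF finB sub])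
  then have "y \<in> flip t ` Z" using y by blast
  then obtain z where z: "z \<in> Z" "y = flip t z" by blast
  show "flip t y \<in> Z" using z(1) by (simp add: z(2) flip_flip)
qed

lemma sum_two:
  fixes f :: "'n::finite \<Rightarrow> real"
  assumes ij: "i \<noteq> j" and f: "\<And>u. u \<noteq> i \<Longrightarrow> u \<noteq> j \<Longrightarrow> f u = 0"
  shows "(\<Sum>u\<in>UNIV. f u) = f i + f j"
proof -
  have "(\<Sum>u\<in>UNIV. f u) = (\<Sum>u\<in>{i,j}. f u)"
    by (rule sum.mono_neutral_right) (use f in auto)
  then show ?thesis using ij by simp
qed

lemma LO:
  fixes v :: "real^'n"
  assumes v: "v \<noteq> 0" and Z: "Z = {y\<in>Sgn. v \<bullet> y = 0}" and eq: "2 * card Z = card (Sgn :: (real^'n) set)"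
  shows "\<exists>a b t. a \<noteq> b \<and> (t = 1 \<or> t = -1) \<and> Z = Ah a b t"
proof -
  obtain i where vi: "v$i \<noteq> 0" using v by (auto simp: vec_eq_iff)
  have cS: "card (Sgn :: (real^'n) set) > 0" using finite_Sgn Sgn_ne by (simp add: card_gt_0_iff)
  have "Z \<noteq> {}" using eq cS by auto
  then obtain z where z: "z \<in> Z" by blast
  have zS: "z \<in> Sgn" and z0: "v \<bullet> z = 0" using z Z by auto
  have key: "v$t1 * z$t1 + v$t2 * z$t2 = 0" if t: "t1 \<noteq> t2" "v$t1 \<noteq> 0" "v$t2 \<noteq> 0" for t1 t2
  proof -
    let ?w = "flip t2 z"
    have wS: "?w \<in> Sgn" using flip_Sgn[OF zS] .
    have "z$t2 \<noteq> 0" using Sgn_pm[OF zS, of t2] by auto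
    then have "v \<bullet> ?w \<noteq> 0" using t z0 by (simp add: inner_flip)
    then have "?w \<notin> Z" using Z by auto
    then have "flip t1 ?w \<in> Z" using LO_half(2)[OF t(2) Z eq wS] by blast
    then have "v \<bullet> flip t1 ?w = 0" using Z by auto
    then show ?thesis using t z0 by (simp add: inner_flip flip_nth)
  qed
  have zne: "z$u \<noteq> 0" for u using Sgn_pm[OF zS, of u] by auto
  obtain j where ji: "j \<noteq> i" and vj: "v$j \<noteq> 0"
  proof (rule ccontr)
    assume "\<not> thesis"
    then have oth: "\<And>u. u \<noteq> i \<Longrightarrow> v$u = 0" using that by blast
    have "v \<bullet> z = (\<Sum>u\<in>UNIV. if u = i then v$i * z$i else 0)"
      unfolding inner_vec_def by (intro sum.cong) (auto simp: oth)
    then have "v \<bullet> z = v$i * z$i" by simp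
    then show False using z0 vi zne[of i] by simp
  qed
  have kij: "v$i * z$i + v$j * z$j = 0" using key[OF ji[symmetric] vi vj] .
  have only: "v$u = 0" if "u \<noteq> i" "u \<noteq> j" for u
  proof (rule ccontr)
    assume vu: "v$u \<noteq> 0"
    have "v$i * z$i + v$u * z$u = 0" using key[of i u] that vi vu by auto
    moreover have "v$j * z$j + v$u * z$u = 0" using key[of j u] that vj vu by auto
    ultimately have "v$i * z$i = 0" using kij by linarith
    then show False using vi zne[of i] by simp
  qed
  have vy: "v \<bullet> y = v$i * y$i + v$j * y$j" for y
    unfolding inner_vec_def using sum_two[OF ji[symmetric], of "\<lambda>u. v$u * y$u"] only by simp
  have vjz: "v$j = - (v$i * z$i * z$j)"
  proof -
    have "v$j = v$j * (z$j * z$j)" using Sgn_sq[OF zS, of j] by simp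
    also have "\<dots> = (v$j * z$j) * z$j" by (simp add: mult_ac)
    also have "v$j * z$j = - (v$i * z$i)" using kij by linarith
    finally show ?thesis by simp
  qed
  have Zeq: "Z = Ah i j (z$i * z$j)"
  proof (rule set_eqI)
    fix y :: "real^'n"
    show "y \<in> Z \<longleftrightarrow> y \<in> Ah i j (z$i * z$j)"
    proof (cases "y \<in> Sgn")
      case False then show ?thesis using Z by (simp add: Ah_def)
    next
      case yS: True
      have "v \<bullet> y = v$i * (y$i - z$i * z$j * y$j)" unfolding vy vjz by (simp add: algebra_simps)
      then have "v \<bullet> y = 0 \<longleftrightarrow> y$i = z$i * z$j * y$j" using vi by simp
      also have "\<dots> \<longleftrightarrow> y$i * y$j = z$i * z$j"
      proof
        assume "y$i = z$i * z$j * y$j"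
        then show "y$i * y$j = z$i * z$j" using Sgn_sq[OF yS, of j] by (simp add: mult_ac)
      next
        assume h: "y$i * y$j = z$i * z$j"
        have "y$i = y$i * (y$j * y$j)" using Sgn_sq[OF yS, of j] by simp
        also have "\<dots> = (y$i * y$j) * y$j" by (simp add: mult_ac)
        finally show "y$i = z$i * z$j * y$j" using h by simp
      qed
      finally show ?thesis using Z yS by (simp add: Ah_def)
    qed
  qed
  have pm: "z$i * z$j = 1 \<or> z$i * z$j = -1" by (rule Sgn_prod[OF zS])
  show ?thesis
    by (rule exI[of _ i], rule exI[of _ j], rule exI[of _ "z$i * z$j"]) (use ji Zeq pm in auto)
qed

lemma E_map:
  fixes s :: "real^'n^'n \<Rightarrow> real^'n^'n"
  assumes s: "s \<in> Aut" and ij: "i \<noteq> j"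
  shows "\<exists>a b t. a \<noteq> b \<and> (t = 1 \<or> t = -1) \<and> s (mat 1 + Em i j) = mat 1 + t *\<^sub>R Em a b"
proof -
  let ?A = "Ah i j 1"
  have AS: "?A \<subseteq> Sgn" by (auto simp: Ah_def)
  have cA: "2 * card ?A = card (Sgn :: (real^'n) set)" using card_Ah[OF ij] by simp
  have cS: "card (Sgn :: (real^'n) set) > 0" using finite_Sgn Sgn_ne by (simp add: card_gt_0_iff)
  have Ane: "?A \<noteq> {}" using cA cS by auto
  have pA: "avg ?A = mat 1 + Em i j" using avg_Ah[OF ij, of 1] by simp
  have pG: "avg ?A \<in> GN" by (rule avg_GN[OF AS Ane])
  have sp: "sing (avg ?A)"
  proof -
    define v where "v = (\<chi> u. if u = i then 1 else if u = j then -1 else (0::real))"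
    have vv: "v$i = 1" "v$j = -1" using ij by (auto simp: v_def)
    have "v \<noteq> 0"
    proof
      assume "v = 0"
      then have "v$i = 0" by simp
      then show False using vv by simp
    qed
    moreover have "qf (avg ?A) v = 0"
    proof -
      have "qf (avg ?A) v = v$i * (avg ?A)$i$i * v$i + v$i * (avg ?A)$i$j * v$j + v$j * (avg ?A)$j$i * v$i + v$j * (avg ?A)$j$j * v$j"
        by (rule qf_two[OF ij]) (simp add: v_def)
      also have "\<dots> = 0" unfolding pA vv using ij by (simp add: Em_def mat_def)
      finally show ?thesis .
    qed
    ultimately show ?thesis unfolding sing_def by blast
  qed
  let ?B = "phi s ` ?A"
  have sB: "s (avg ?A) = avg ?B" by (rule Aut_avg_phi[OF s AS Ane])
  have injA: "inj_on (phi s) ?A" using phi_inj[OF s] AS by (rule inj_on_subset)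
  have cB: "card ?B = card ?A" by (rule card_image[OF injA])
  have BS: "?B \<subseteq> Sgn" using phi_props(1)[OF s] AS by blast
  have finB: "finite ?B" using finite_Sgn BS finite_subset by blast
  have cBpos: "card ?B > 0" using cB cA cS by simp
  obtain v where v: "v \<noteq> 0" and qv: "qf (avg ?B) v = 0"
    using sing_transfer[OF s pG sp] unfolding sB sing_def by blast
  have "qf (avg ?B) v = (1 / real (card ?B)) * (\<Sum>y\<in>?B. (y \<bullet> v) * (y \<bullet> v))"
    by (simp add: avg_def qf_scale qf_sum qf_outer)
  then have "(\<Sum>y\<in>?B. (y \<bullet> v) * (y \<bullet> v)) = 0" using qv cBpos by simp
  then have "\<forall>y\<in>?B. (y \<bullet> v) * (y \<bullet> v) = 0" using finB by (simp add: sum_nonneg_eq_0_iff)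
  then have B0: "\<forall>y\<in>?B. v \<bullet> y = 0" by (simp add: inner_commute)
  define Z where "Z = {y\<in>Sgn. v \<bullet> y = 0}"
  have BZ: "?B \<subseteq> Z" using BS B0 by (auto simp: Z_def)
  have finZ: "finite Z" using finite_Sgn unfolding Z_def by (rule finite_subset[rotated]) auto
  obtain t0 where vt0: "v$t0 \<noteq> 0" using v by (auto simp: vec_eq_iff)
  have le: "2 * card Z \<le> card (Sgn :: (real^'n) set)" by (rule LO_half(1)[OF vt0 Z_def])
  have "card ?B \<le> card Z" by (rule card_mono[OF finZ BZ])
  then have eqZ: "2 * card Z = card (Sgn :: (real^'n) set)" using le cB cA by linarith
  obtain a b t where ab: "a \<noteq> b" "t = 1 \<or> t = -1" "Z = Ah a b t" using LO[OF v Z_def eqZ] by blast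
  have "card ?B = card Z" using eqZ cB cA by linarith
  then have "?B = Z" by (rule card_subset_eq[OF finZ BZ])
  then have "s (avg ?A) = mat 1 + t *\<^sub>R Em a b" using sB ab avg_Ah[OF ab(1) ab(2)] by simp
  then show ?thesis using pA ab by metis
qed

lemma inner_mat: "(X :: real^'n^'n) \<bullet> Y = (\<Sum>u\<in>UNIV. \<Sum>w\<in>UNIV. X$u$w * Y$u$w)"
  by (simp add: inner_vec_def inner_real_def)

lemma inner_op2: "op2 a b \<bullet> op2 c d = (a \<bullet> c) * (b \<bullet> d)"
proof -
  have "op2 a b \<bullet> op2 c d = (\<Sum>u\<in>UNIV. (a$u * c$u) * (\<Sum>w\<in>UNIV. b$w * d$w))"
    unfolding inner_mat op2_def sum_distrib_left by (intro sum.cong refl) (simp add: mult_ac)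
  also have "\<dots> = (a \<bullet> c) * (b \<bullet> d)"
    by (simp only: sum_distrib_right[symmetric] inner_vec_def inner_real_def)
  finally show ?thesis .
qed

lemma ev_inner_ev: "ev i \<bullet> ev k = (if i = k then 1 else 0)"
  by (simp add: inner_ev ev_nth)

lemma Em_op2: "i \<noteq> j \<Longrightarrow> Em i j = op2 (ev i) (ev j) + op2 (ev j) (ev i)"
  by (auto simp: vec_eq_iff Em_def op2_def ev_nth)

lemma Em_sym: "Em j i = Em i j" by (auto simp: Em_def vec_eq_iff)

lemma inner_Em:
  assumes "i \<noteq> j" "k \<noteq> l"
  shows "Em i j \<bullet> Em k l = (if (k = i \<and> l = j) \<or> (k = j \<and> l = i) then 2 else 0)"
  using assms unfolding Em_op2[OF assms(1)] Em_op2[OF assms(2)]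
  by (auto simp: inner_add_left inner_add_right inner_op2 ev_inner_ev)

lemma outer_op2: "outer x = op2 x x" by (simp add: outer_def op2_def)

lemma inner_outer: "outer x \<bullet> outer y = (x \<bullet> y) * (x \<bullet> y)"
  unfolding outer_op2 inner_op2 ..

definition cf :: "real^'n^'n \<Rightarrow> 'n \<Rightarrow> 'n \<Rightarrow> real" where
  "cf X i j = (if i = j then 0 else X$i$j)"

lemma sum2_delta:
  fixes f :: "'n::finite \<Rightarrow> 'n \<Rightarrow> real"
  shows "(\<Sum>i\<in>UNIV. \<Sum>j\<in>UNIV. if i = a \<and> j = b then f i j else 0) = f a b"
proof -
  have "(\<Sum>i\<in>UNIV. \<Sum>j\<in>UNIV. if i = a \<and> j = b then f i j else 0) =
        (\<Sum>i\<in>UNIV. if i = a then (\<Sum>j\<in>UNIV. if j = b then f i j else 0) else 0)"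
    by (intro sum.cong) auto
  then show ?thesis by simp
qed

lemma S0_span:
  assumes S: "S0 X"
  shows "X = (1/2) *\<^sub>R (\<Sum>i\<in>UNIV. \<Sum>j\<in>UNIV. cf X i j *\<^sub>R Em i j)"
proof -
  have "(\<Sum>i\<in>UNIV. \<Sum>j\<in>UNIV. cf X i j *\<^sub>R Em i j) $ u $ w = 2 * X$u$w" for u w
  proof -
    have e0: "(\<Sum>i\<in>UNIV. \<Sum>j\<in>UNIV. cf X i j *\<^sub>R Em i j) $ u $ w =
          (\<Sum>i\<in>UNIV. \<Sum>j\<in>UNIV. cf X i j * Em i j $ u $ w)"
      by (simp add: sum_component)
    show ?thesis
    proof (cases "u = w")
      case True
      have z: "\<And>i j. cf X i j * Em i j $ u $ w = 0" by (auto simp: Em_def cf_def True)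
      have "(\<Sum>i\<in>UNIV. \<Sum>j\<in>UNIV. cf X i j * Em i j $ u $ w) = 0" by (simp only: z sum.neutral_const)
      then show ?thesis using e0 S True by (simp add: S0_def)
    next
      case False
      have "(\<Sum>i\<in>UNIV. \<Sum>j\<in>UNIV. cf X i j * Em i j $ u $ w) =
        (\<Sum>i\<in>UNIV. \<Sum>j\<in>UNIV. (if i = u \<and> j = w then X$i$j else 0) + (if i = w \<and> j = u then X$i$j else 0))"
        by (intro sum.cong refl) (auto simp: Em_def cf_def False)
      also have "\<dots> = X$u$w + X$w$u"
        by (simp only: sum.distrib sum2_delta)
      also have "\<dots> = 2 * X$u$w" using S by (simp add: S0_def)
      finally show ?thesis using e0 by simp
    qed
  qed
  then show ?thesis by (simp add: vec_eq_iff)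
qed

lemma linear_span_S0:
  fixes F :: "real^'n^'n \<Rightarrow> 'b::real_vector"
  assumes F: "linear F" and S: "S0 X"
  shows "F X = (1/2) *\<^sub>R (\<Sum>i\<in>UNIV. \<Sum>j\<in>UNIV. cf X i j *\<^sub>R F (Em i j))"
proof -
  have "F X = F ((1/2) *\<^sub>R (\<Sum>i\<in>UNIV. \<Sum>j\<in>UNIV. cf X i j *\<^sub>R Em i j))"
    using S0_span[OF S] by simp
  also have "\<dots> = (1/2) *\<^sub>R (\<Sum>i\<in>UNIV. \<Sum>j\<in>UNIV. cf X i j *\<^sub>R F (Em i j))"
    using F by (simp add: linear_scale linear_sum)
  finally show ?thesis .
qed

lemma inner_span:
  fixes F :: "real^'n^'n \<Rightarrow> real^'n^'n"
  assumes F: "linear F" and X: "S0 X" and Y: "S0 Y"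
  shows "F X \<bullet> F Y = (1/2) * (\<Sum>i\<in>UNIV. \<Sum>j\<in>UNIV. cf Y i j *
      ((1/2) * (\<Sum>k\<in>UNIV. \<Sum>l\<in>UNIV. cf X k l * (F (Em k l) \<bullet> F (Em i j)))))"
  unfolding linear_span_S0[OF F X] linear_span_S0[OF F Y]
  by (simp only: inner_scaleR_left inner_scaleR_right inner_sum_left inner_sum_right)

lemma I_Em_GN: "i \<noteq> j \<Longrightarrow> mat 1 + Em i j \<in> (GN :: (real^'n^'n) set)"
proof -
  assume ij: "i \<noteq> j"
  have "Ah i j 1 \<subseteq> (Sgn :: (real^'n) set)" by (auto simp: Ah_def)
  moreover have "Ah i j 1 \<noteq> ({} :: (real^'n) set)"
  proof -
    have "2 * card (Ah i j 1) = card (Sgn :: (real^'n) set)" using card_Ah[OF ij] by simp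
    moreover have "card (Sgn :: (real^'n) set) > 0" using finite_Sgn Sgn_ne by (simp add: card_gt_0_iff)
    ultimately show ?thesis by auto
  qed
  ultimately have "avg (Ah i j 1) \<in> (GN :: (real^'n^'n) set)" by (rule avg_GN)
  then show ?thesis using avg_Ah[OF ij, of 1] by simp
qed

lemma L_E:
  fixes s :: "real^'n^'n \<Rightarrow> real^'n^'n"
  assumes s: "s \<in> Aut" and ij: "i \<noteq> j"
  shows "\<exists>a b t. a \<noteq> b \<and> (t = 1 \<or> t = -1) \<and> Lf s (Em i j) = t *\<^sub>R Em a b"
proof -
  obtain a b t where ab: "a \<noteq> b" "t = 1 \<or> t = -1" "s (mat 1 + Em i j) = mat 1 + t *\<^sub>R Em a b"
    using E_map[OF s ij] by blast
  have "s (mat 1 + Em i j) = s (mat 1) + Lf s (Em i j)"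
    using Lf_rep[OF Aut_aff[OF s] I_Em_GN[OF ij]] by simp
  then have "Lf s (Em i j) = t *\<^sub>R Em a b" using ab(3) Aut_I[OF s] by simp
  then show ?thesis using ab by blast
qed


lemma S0_Em: "k \<noteq> l \<Longrightarrow> S0 (Em k l)"
  unfolding S0_def Em_def by auto

lemma S0_diff: "S0 X \<Longrightarrow> S0 Y \<Longrightarrow> S0 (X - Y)" by (simp add: S0_def)

lemma Em_ij: "i \<noteq> j \<Longrightarrow> Em i j $ i $ j = 1" by (simp add: Em_def)

lemma L_inner_E:
  fixes s :: "real^'n^'n \<Rightarrow> real^'n^'n"
  assumes s: "s \<in> Aut" and ij: "i \<noteq> j" and kl: "k \<noteq> l"
  shows "Lf s (Em k l) \<bullet> Lf s (Em i j) = Em k l \<bullet> Em i j"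
proof -
  have aff: "affine_on GN s" using s by (rule Aut_aff)
  have lin: "linear (Lf s)" by (rule Lf_linear[OF aff])
  obtain a b t where ab: "a \<noteq> b" "t = 1 \<or> t = -1" "Lf s (Em i j) = t *\<^sub>R Em a b"
    using L_E[OF s ij] by blast
  obtain c d t' where cd: "c \<noteq> d" "t' = 1 \<or> t' = -1" "Lf s (Em k l) = t' *\<^sub>R Em c d"
    using L_E[OF s kl] by blast
  have tt: "t * t = 1" "t' * t' = 1" using ab(2) cd(2) by auto
  show ?thesis
  proof (cases "(k = i \<and> l = j) \<or> (k = j \<and> l = i)")
    case True
    then have e: "Em k l = Em i j"
    proof
      assume "k = i \<and> l = j" then show ?thesis by simp
    next
      assume "k = j \<and> l = i" then show ?thesis using Em_sym[of i j] by simp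
    qed
    have "Lf s (Em k l) \<bullet> Lf s (Em i j) = t * t * (Em a b \<bullet> Em a b)" unfolding e ab(3) by simp
    also have "\<dots> = 2" using tt inner_Em[OF ab(1) ab(1)] by simp
    also have "2 = Em k l \<bullet> Em i j" unfolding e using inner_Em[OF ij ij] by simp
    finally show ?thesis .
  next
    case F: False
    have r: "Em k l \<bullet> Em i j = 0" using inner_Em[OF kl ij] F by auto
    have "Lf s (Em k l) \<bullet> Lf s (Em i j) = 0"
    proof (cases "(c = a \<and> d = b) \<or> (c = b \<and> d = a)")
      case False
      then show ?thesis unfolding ab(3) cd(3) using inner_Em[OF cd(1) ab(1)] by auto
    next
      case True
      then have ecd: "Em c d = Em a b"
      proof
        assume "c = a \<and> d = b" then show ?thesis by simp
      next
        assume "c = b \<and> d = a" then show ?thesis using Em_sym[of a b] by simp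
      qed
      have "Lf s (t *\<^sub>R Em k l - t' *\<^sub>R Em i j) = t *\<^sub>R Lf s (Em k l) - t' *\<^sub>R Lf s (Em i j)"
        using lin by (simp add: linear_diff linear_scale)
      also have "\<dots> = 0" unfolding ab(3) cd(3) ecd by (simp add: algebra_simps)
      finally have z: "Lf s (t *\<^sub>R Em k l - t' *\<^sub>R Em i j) = 0" .
      have S: "S0 (t *\<^sub>R Em k l - t' *\<^sub>R Em i j)"
        by (rule S0_diff; rule S0_scale; rule S0_Em) (simp_all add: kl ij)
      have "t *\<^sub>R Em k l - t' *\<^sub>R Em i j = 0" by (rule Lf_inj[OF aff Aut_inj[OF s] S z])
      then have "(t *\<^sub>R Em k l - t' *\<^sub>R Em i j) $ k $ l = 0" by simp
      moreover have "Em i j $ k $ l = 0" using F by (auto simp: Em_def)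
      ultimately have "t = 0" using Em_ij[OF kl] by simp
      then show ?thesis using ab(2) by simp
    qed
    then show ?thesis using r by simp
  qed
qed

lemma L_isometry:
  fixes s :: "real^'n^'n \<Rightarrow> real^'n^'n"
  assumes s: "s \<in> Aut" and X: "S0 X" and Y: "S0 Y"
  shows "Lf s X \<bullet> Lf s Y = X \<bullet> Y"
proof -
  have lin: "linear (Lf s)" by (rule Lf_linear[OF Aut_aff[OF s]])
  have lid: "linear (\<lambda>x::real^'n^'n. x)" by (rule linearI) simp_all
  have P2: "cf X k l * (Lf s (Em k l) \<bullet> Lf s (Em i j)) = cf X k l * (Em k l \<bullet> Em i j)"
    if ij: "i \<noteq> j" for i j k l
    using L_inner_E[OF s ij, of k l] by (cases "k = l") (auto simp: cf_def)
  have P: "cf Y i j * ((1/2) * (\<Sum>k\<in>UNIV. \<Sum>l\<in>UNIV. cf X k l * (Lf s (Em k l) \<bullet> Lf s (Em i j)))) =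
           cf Y i j * ((1/2) * (\<Sum>k\<in>UNIV. \<Sum>l\<in>UNIV. cf X k l * (Em k l \<bullet> Em i j)))" for i j
  proof (cases "i = j")
    case True then show ?thesis by (simp add: cf_def)
  next
    case False then show ?thesis by (simp only: P2[OF False])
  qed
  have "Lf s X \<bullet> Lf s Y = (1/2) * (\<Sum>i\<in>UNIV. \<Sum>j\<in>UNIV. cf Y i j *
      ((1/2) * (\<Sum>k\<in>UNIV. \<Sum>l\<in>UNIV. cf X k l * (Lf s (Em k l) \<bullet> Lf s (Em i j)))))"
    by (rule inner_span[OF lin X Y])
  also have "\<dots> = (1/2) * (\<Sum>i\<in>UNIV. \<Sum>j\<in>UNIV. cf Y i j *
      ((1/2) * (\<Sum>k\<in>UNIV. \<Sum>l\<in>UNIV. cf X k l * (Em k l \<bullet> Em i j))))"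
    by (simp only: P)
  also have "\<dots> = X \<bullet> Y"
    using inner_span[OF lid X Y] by simp
  finally show ?thesis .
qed

definition one :: "real^'n" where "one = (\<chi> u. 1)"

lemma one_Sgn: "one \<in> Sgn" by (simp add: one_def Sgn_def)

lemma inner_one: "y \<bullet> one = (\<Sum>u\<in>UNIV. y$u)" by (simp add: inner_vec_def one_def)

lemma Sgn_self: "y \<in> Sgn \<Longrightarrow> y \<bullet> y = real CARD('n)"
  for y :: "real^'n" by (simp add: inner_vec_def Sgn_sq)

lemma flip_one_sum: "flip i one \<bullet> (one :: real^'n) = real CARD('n) - 2"
proof -
  have "flip i one \<bullet> (one :: real^'n) = (\<Sum>u\<in>UNIV. 1 - (if u = i then 2 else 0))"
    unfolding inner_one by (intro sum.cong) (auto simp: flip_nth one_def)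
  also have "\<dots> = real CARD('n) - 2" by (simp add: sum_subtractf)
  finally show ?thesis .
qed

lemma norm_cut_diff: "x \<in> Sgn \<Longrightarrow> (outer x - outer one) \<bullet> (outer x - outer one) =
   2 * (real CARD('n) * real CARD('n)) - 2 * ((x \<bullet> one) * (x \<bullet> one))"
  for x :: "real^'n"
proof -
  assume x: "x \<in> Sgn"
  have o: "(one::real^'n) \<bullet> one = real CARD('n)" by (rule Sgn_self[OF one_Sgn])
  show ?thesis using Sgn_self[OF x] o
    by (simp add: inner_diff_left inner_diff_right inner_outer inner_commute)
qed

lemma star_image:
  fixes s :: "real^'n^'n \<Rightarrow> real^'n^'n"
  assumes s: "s \<in> Aut" and sJ: "s (outer one) = outer one"
  shows "\<exists>r. s (outer (flip i one)) = outer (flip r one)"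
proof -
  let ?J = "outer (one :: real^'n)"
  let ?x = "flip i (one :: real^'n)"
  have xS: "?x \<in> Sgn" by (rule flip_Sgn[OF one_Sgn])
  have aff: "affine_on GN s" using s by (rule Aut_aff)
  have lin: "linear (Lf s)" by (rule Lf_linear[OF aff])
  define y where "y = phi s ?x"
  have yS: "y \<in> Sgn" and sy: "s (outer ?x) = outer y" using phi_props[OF s xS] by (auto simp: y_def)
  have JG: "?J \<in> GN" by (rule outer_GN[OF one_Sgn])
  have xG: "outer ?x \<in> GN" by (rule outer_GN[OF xS])
  define X where "X = outer ?x - ?J"
  have SX: "S0 X"
  proof -
    have "X = (outer ?x - mat 1) - (?J - mat 1)" by (simp add: X_def)
    then show ?thesis using S0_diff[OF S0_GN[OF xG] S0_GN[OF JG]] by simp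
  qed
  have LX: "Lf s X = outer y - ?J"
  proof -
    have "X = (outer ?x - mat 1) - (?J - mat 1)" by (simp add: X_def)
    then have "Lf s X = Lf s (outer ?x - mat 1) - Lf s (?J - mat 1)" using lin by (simp add: linear_diff)
    also have "\<dots> = s (outer ?x) - s ?J"
      using Lf_rep[OF aff xG] Lf_rep[OF aff JG] by (simp add: algebra_simps)
    finally show ?thesis using sy sJ by simp
  qed
  have "Lf s X \<bullet> Lf s X = X \<bullet> X" by (rule L_isometry[OF s SX SX])
  then have "(outer y - ?J) \<bullet> (outer y - ?J) = (outer ?x - ?J) \<bullet> (outer ?x - ?J)"
    unfolding LX by (simp add: X_def)
  then have "(y \<bullet> one) * (y \<bullet> one) = (?x \<bullet> one) * (?x \<bullet> one)"
    unfolding norm_cut_diff[OF yS] norm_cut_diff[OF xS] by simp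
  then have "y \<bullet> one = ?x \<bullet> one \<or> y \<bullet> one = - (?x \<bullet> one)" by (simp add: square_eq_iff)
  then obtain y' where y'S: "y' \<in> Sgn" and oy: "outer y' = outer y" and y1: "y' \<bullet> one = real CARD('n) - 2"
  proof
    assume "y \<bullet> one = ?x \<bullet> one"
    then show thesis using that[of y] yS flip_one_sum[of i] by simp
  next
    assume "y \<bullet> one = - (?x \<bullet> one)"
    then have "(- y) \<bullet> one = real CARD('n) - 2" using flip_one_sum[of i] by simp
    then show thesis using that[of "- y"] Sgn_neg[OF yS] outer_neg[of y] by simp
  qed
  define R where "R = {u. y'$u = -1}"
  have "(\<Sum>u\<in>UNIV. 1 - y'$u) = 2"
  proof -
    have "(\<Sum>u\<in>UNIV. 1 - y'$u) = real CARD('n) - y' \<bullet> one" by (simp add: sum_subtractf inner_one)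
    then show ?thesis using y1 by simp
  qed
  moreover have "(\<Sum>u\<in>UNIV. 1 - y'$u) = (\<Sum>u\<in>UNIV. if u \<in> R then 2 else 0)"
    by (intro sum.cong refl) (use Sgn_pm[OF y'S] in \<open>auto simp: R_def\<close>)
  moreover have "(\<Sum>u\<in>UNIV. if u \<in> R then 2 else (0::real)) = 2 * real (card R)"
    by (simp add: sum.inter_filter[symmetric] R_def)
  ultimately have "card R = 1" by simp
  then obtain r where R: "R = {r}" by (rule card_1_singletonE)
  have "y' = flip r one"
    unfolding vec_eq_iff
  proof (intro allI)
    fix u
    show "y'$u = flip r one $ u"
    proof (cases "u = r")
      case True then show ?thesis using R by (auto simp: R_def flip_nth one_def)
    next
      case False
      then have "u \<notin> R" using R by simp
      then show ?thesis using Sgn_pm[OF y'S, of u] False by (auto simp: R_def flip_nth one_def)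
    qed
  qed
  then show ?thesis using sy oy by metis
qed

definition rho :: "(real^'n^'n \<Rightarrow> real^'n^'n) \<Rightarrow> 'n \<Rightarrow> 'n" where
  "rho s i = (SOME r. s (outer (flip i one)) = outer (flip r one))"

lemma rho_spec:
  fixes s :: "real^'n^'n \<Rightarrow> real^'n^'n"
  assumes s: "s \<in> Aut" and sJ: "s (outer one) = outer one"
  shows "s (outer (flip i one)) = outer (flip (rho s i) one)"
  unfolding rho_def using star_image[OF s sJ, of i] by (rule someI_ex)

lemma three_elem:
  assumes "CARD('n) \<ge> 3"
  shows "\<exists>k::'n. k \<noteq> i \<and> k \<noteq> j"
proof -
  have c2: "card {i, j} \<le> 2" by (simp add: card_insert_if)
  have "card (UNIV - {i, j}) = CARD('n) - card {i, j}" by (rule card_Diff_subset) auto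
  then have "card (UNIV - {i, j}) \<ge> CARD('n) - 2" using c2 by simp
  then have "card (UNIV - {i, j}) > 0" using assms by linarith
  then have "UNIV - {i, j} \<noteq> {}" by (simp only: card_gt_0_iff) blast
  then show ?thesis by blast
qed

lemma rho_inj:
  fixes s :: "real^'n^'n \<Rightarrow> real^'n^'n"
  assumes s: "s \<in> Aut" and sJ: "s (outer one) = outer one" and N: "CARD('n) \<ge> 3"
  shows "inj (rho s)"
proof (rule injI)
  fix i j assume e: "rho s i = rho s j"
  show "i = j"
  proof (rule ccontr)
    assume ij: "i \<noteq> j"
    have "s (outer (flip i one)) = s (outer (flip j one))" using rho_spec[OF s sJ, of i] rho_spec[OF s sJ, of j] e by simp
    moreover have "outer (flip i one) \<in> GN" "outer (flip j one) \<in> GN" using outer_GN flip_Sgn one_Sgn by blast+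
    ultimately have "outer (flip i one) = outer (flip j (one::real^'n))" using Aut_inj[OF s] by (meson inj_onD)
    then have "flip j one = flip i one \<or> flip j one = - flip i (one::real^'n)"
      by (intro outer_eq) (auto intro: flip_Sgn one_Sgn)
    moreover obtain k where k: "k \<noteq> i" "k \<noteq> j" using three_elem[OF N] by blast
    moreover have "flip j one $ i \<noteq> flip i (one::real^'n) $ i" using ij by (simp add: flip_nth one_def)
    moreover have "flip j one $ k \<noteq> - flip i (one::real^'n) $ k" using k by (simp add: flip_nth one_def)
    ultimately show False by auto
  qed
qed

lemma fourcut:
  assumes ij: "i \<noteq> j"
  shows "4 *\<^sub>R Em i j = outer one - outer (flip i one) - outer (flip j one) + outer (flip i (flip j (one :: real^'n)))"
  using ij by (auto simp: vec_eq_iff Em_def outer_def flip_nth one_def)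

lemma Lrep_I:
  fixes s :: "real^'n^'n \<Rightarrow> real^'n^'n"
  assumes s: "s \<in> Aut" and G: "G \<in> GN"
  shows "Lf s (G - mat 1) = s G - mat 1"
  using Lf_rep[OF Aut_aff[OF s] G] Aut_I[OF s] by simp

lemma L_E_rho:
  fixes s :: "real^'n^'n \<Rightarrow> real^'n^'n"
  assumes s: "s \<in> Aut" and sJ: "s (outer one) = outer one" and N: "CARD('n) \<ge> 3" and ij: "i \<noteq> j"
  shows "Lf s (Em i j) = Em (rho s i) (rho s j)"
proof -
  let ?r = "rho s i" and ?r' = "rho s j"
  have rr: "?r \<noteq> ?r'" using rho_inj[OF s sJ N] ij by (meson injD)
  have aff: "affine_on GN s" using s by (rule Aut_aff)
  have lin: "linear (Lf s)" by (rule Lf_linear[OF aff])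
  obtain a b t where ab: "a \<noteq> b" "t = 1 \<or> t = -1" "Lf s (Em i j) = t *\<^sub>R Em a b"
    using L_E[OF s ij] by blast
  let ?J = "outer (one :: real^'n)"
  let ?xi = "flip i (one :: real^'n)" and ?xj = "flip j (one :: real^'n)" and ?xij = "flip i (flip j (one :: real^'n))"
  have Si: "?xi \<in> Sgn" "?xj \<in> Sgn" "?xij \<in> Sgn" using flip_Sgn one_Sgn by blast+
  define y where "y = phi s ?xij"
  have yS: "y \<in> Sgn" and sy: "s (outer ?xij) = outer y" using phi_props[OF s Si(3)] by (auto simp: y_def)
  have G: "?J \<in> GN" "outer ?xi \<in> GN" "outer ?xj \<in> GN" "outer ?xij \<in> GN"
    using outer_GN one_Sgn Si by blast+
  have "(4 * t) *\<^sub>R Em a b = 4 *\<^sub>R Lf s (Em i j)" using ab(3) by simp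
  also have "\<dots> = Lf s (4 *\<^sub>R Em i j)" using lin by (simp add: linear_scale)
  also have "4 *\<^sub>R Em i j = (?J - mat 1) - (outer ?xi - mat 1) - (outer ?xj - mat 1) + (outer ?xij - mat 1)"
    using fourcut[OF ij] by simp
  also have "Lf s \<dots> = Lf s (?J - mat 1) - Lf s (outer ?xi - mat 1) - Lf s (outer ?xj - mat 1) + Lf s (outer ?xij - mat 1)"
    using lin by (simp add: linear_diff linear_add)
  also have "\<dots> = ?J - outer (flip ?r one) - outer (flip ?r' one) + outer y"
    unfolding Lrep_I[OF s G(1)] Lrep_I[OF s G(2)] Lrep_I[OF s G(3)] Lrep_I[OF s G(4)]
      sJ rho_spec[OF s sJ] sy by simp
  finally have eq: "(4 * t) *\<^sub>R Em a b = ?J - outer (flip ?r one) - outer (flip ?r' one) + outer y" .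
  have "((4 * t) *\<^sub>R Em a b) $ ?r $ ?r' = 3 + y$?r * y$?r'"
    unfolding eq using rr by (simp add: outer_def flip_nth one_def)
  then have ent: "4 * t * Em a b $ ?r $ ?r' = 3 + y$?r * y$?r'" by simp
  have yy: "y$?r * y$?r' = 1 \<or> y$?r * y$?r' = -1" by (rule Sgn_prod[OF yS])
  have ne: "Em a b $ ?r $ ?r' \<noteq> 0" using ent yy by auto
  then have c: "(?r = a \<and> ?r' = b) \<or> (?r = b \<and> ?r' = a)" by (auto simp: Em_def split: if_splits)
  then have "Em a b $ ?r $ ?r' = 1" by (auto simp: Em_def)
  then have "t = 1" using ent yy ab(2) by auto
  moreover have "Em a b = Em ?r ?r'" using c Em_sym by (metis)
  ultimately show ?thesis using ab(3) by simp
qed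

lemma L_E_two:
  fixes s :: "real^'n^'n \<Rightarrow> real^'n^'n"
  assumes s: "s \<in> Aut" and sJ: "s (outer one) = outer one" and N: "CARD('n) \<le> 2" and ij: "i \<noteq> j"
  shows "Lf s (Em i j) = Em i j"
proof -
  have c2: "card {i, j} = 2" using ij by simp
  have U: "{i, j} = (UNIV :: 'n set)"
    by (rule card_subset_eq) (use c2 N card_mono[of UNIV "{i,j}"] in auto)
  have all: "u = i \<or> u = j" for u using U by blast
  obtain a b t where ab: "a \<noteq> b" "t = 1 \<or> t = -1" "Lf s (Em i j) = t *\<^sub>R Em a b"
    using L_E[OF s ij] by blast
  have Eab: "Em a b = Em i j"
    using all[of a] all[of b] ab(1) Em_sym[of i j] by auto
  have JI: "outer one - mat 1 = Em i j"
    unfolding vec_eq_iff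
  proof (intro allI)
    fix u w
    show "(outer one - mat 1) $ u $ w = Em i j $ u $ w"
      using all[of u] all[of w] ij by (auto simp: outer_def one_def mat_def Em_def)
  qed
  have "Lf s (Em i j) = s (outer one) - mat 1"
    using Lrep_I[OF s outer_GN[OF one_Sgn]] JI by simp
  then have "t *\<^sub>R Em i j = Em i j" using ab(3) Eab sJ JI by simp
  then have "(t *\<^sub>R Em i j) $ i $ j = Em i j $ i $ j" by simp
  then have "t * Em i j $ i $ j = Em i j $ i $ j" by simp
  then have "t = 1" using Em_ij[OF ij] by simp
  then show ?thesis using ab(3) Eab by simp
qed

lemma permM_linear: "linear (permM p)"
  by (rule linearI) (simp_all add: permM_def vec_eq_iff)

lemma permM_Em:
  assumes p: "p permutes UNIV"
  shows "permM (inv p) (Em i j) = Em (p i) (p j)"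
proof -
  have iv: "inv p u = i \<longleftrightarrow> u = p i" for u i using p by (metis permutes_inverses(1) permutes_inverses(2))
  show ?thesis by (simp add: permM_def Em_def vec_eq_iff iv)
qed

lemma permM_I:
  assumes p: "p permutes UNIV"
  shows "permM p (mat 1) = mat 1"
proof -
  have "inj p" using p by (rule permutes_inj)
  then show ?thesis by (auto simp: permM_def mat_def vec_eq_iff inj_eq)
qed

lemma norm_main:
  fixes s :: "real^'n^'n \<Rightarrow> real^'n^'n"
  assumes s: "s \<in> Aut" and sJ: "s (outer one) = outer one"
  shows "\<exists>p. p permutes UNIV \<and> (\<forall>G\<in>GN. s G = permM (inv p) G)"
proof -
  obtain p where p: "p permutes UNIV" and pE: "\<And>i j. i \<noteq> j \<Longrightarrow> Lf s (Em i j) = Em (p i) (p j)"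
  proof (cases "CARD('n) \<ge> 3")
    case True
    have "inj (rho s)" by (rule rho_inj[OF s sJ True])
    then have "bij (rho s)" using finite_UNIV_inj_surj[of "rho s"] by (simp add: bij_def)
    then have "rho s permutes UNIV" by (rule bij_imp_permutes) simp
    then show thesis using that L_E_rho[OF s sJ True] by blast
  next
    case False
    then have "CARD('n) \<le> 2" by simp
    then show thesis using that[of id] L_E_two[OF s sJ] by (simp add: permutes_id)
  qed
  have aff: "affine_on GN s" using s by (rule Aut_aff)
  have lin: "linear (Lf s)" by (rule Lf_linear[OF aff])
  have linM: "linear (permM (inv p))" by (rule permM_linear)
  have pi: "inv p permutes UNIV" using p by (rule permutes_inv)
  have LM: "Lf s X = permM (inv p) X" if X: "S0 X" for X
  proof -
    have P: "cf X i j *\<^sub>R Lf s (Em i j) = cf X i j *\<^sub>R permM (inv p) (Em i j)" for i j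
      using pE[of i j] permM_Em[OF p, of i j] by (cases "i = j") (simp_all add: cf_def)
    show ?thesis unfolding linear_span_S0[OF lin X] linear_span_S0[OF linM X] by (simp only: P)
  qed
  have "s G = permM (inv p) G" if G: "G \<in> GN" for G
  proof -
    have "s G = mat 1 + Lf s (G - mat 1)" using Lrep_I[OF s G] by simp
    also have "\<dots> = mat 1 + permM (inv p) (G - mat 1)" using LM[OF S0_GN[OF G]] by simp
    also have "\<dots> = permM (inv p) G" using linM permM_I[OF pi] by (simp add: linear_diff)
    finally show ?thesis .
  qed
  then show ?thesis using p by blast
qed

theorem theorem4:
  shows "(Aut :: (real^'n^'n \<Rightarrow> real^'n^'n) set) = Sym"
proof
  show "Sym \<subseteq> Aut" by (rule Sym_sub_Aut)
  show "(Aut :: (real^'n^'n \<Rightarrow> real^'n^'n) set) \<subseteq> Sym"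
  proof
    fix s :: "real^'n^'n \<Rightarrow> real^'n^'n" assume s: "s \<in> Aut"
    define y0 where "y0 = phi s one"
    have y0S: "y0 \<in> Sgn" and sJ: "s (outer one) = outer y0" using phi_props[OF s one_Sgn] by (auto simp: y0_def)
    define T where "T = {a. y0$a = -1}"
    define sv where "sv = (\<lambda>u. if u \<in> T then -1 else (1::real))"
    have svpm: "\<And>u. sv u = 1 \<or> sv u = -1" by (simp add: sv_def)
    have sv1: "sv u * y0$u = 1" for u using Sgn_pm[OF y0S, of u] by (auto simp: sv_def T_def)
    have RT: "RMap T = sgnM sv" using RMap_eq[of T] by (simp add: sv_def fun_eq_iff)
    define s1 where "s1 = extGN (RMap T) \<circ> s"
    have s1A: "s1 \<in> Aut" unfolding s1_def by (rule Aut_comp[OF R_Aut(1) s])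
    have JG: "outer one \<in> GN" by (rule outer_GN[OF one_Sgn])
    have "s1 (outer one) = sgnM sv (outer y0)"
      using Aut_inv(4)[OF s JG] sJ by (simp add: s1_def extGN_def RT)
    also have "\<dots> = outer one"
    proof -
      have "sv u * (y0$u * y0$w) * sv w = (sv u * y0$u) * (sv w * y0$w)" for u w by (simp add: mult_ac)
      then show ?thesis using sv1 by (simp add: sgnM_def outer_def one_def vec_eq_iff)
    qed
    finally have s1J: "s1 (outer one) = outer one" .
    obtain p where p: "p permutes UNIV" and s1G: "\<forall>G\<in>GN. s1 G = permM (inv p) G"
      using norm_main[OF s1A s1J] by blast
    have pi: "inv p permutes UNIV" using p by (rule permutes_inv)
    have "s = extGN (RMap T) \<circ> (extGN (PiMap (inv p)) \<circ> (\<lambda>G. G))"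
    proof (rule ext)
      fix G :: "real^'n^'n"
      show "s G = (extGN (RMap T) \<circ> (extGN (PiMap (inv p)) \<circ> (\<lambda>G. G))) G"
      proof (cases "G \<in> GN")
        case True
        have sG: "s G \<in> GN" using Aut_inv(4)[OF s True] .
        have "s1 G = permM (inv p) G" using s1G True by blast
        then have "sgnM sv (s G) = permM (inv p) G" using sG by (simp add: s1_def extGN_def RT)
        have inv: "sgnM sv (sgnM sv X) = X" for X by (rule sgnM_inv) (rule svpm)
        then have "s G = sgnM sv (sgnM sv (s G))" by simp
        then have "s G = sgnM sv (permM (inv p) G)" using \<open>sgnM sv (s G) = permM (inv p) G\<close> by simp
        moreover have "permM (inv p) G \<in> GN" by (rule permM_GN[OF pi True])
        ultimately show ?thesis using True by (simp add: extGN_def RT PiMap_eq[OF pi])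
      next
        case False
        have "s G = G" using s False unfolding Aut_def by blast
        then show ?thesis using False by (simp add: extGN_def)
      qed
    qed
    moreover have "extGN (RMap T) \<circ> (extGN (PiMap (inv p)) \<circ> (\<lambda>G. G)) \<in> Sym"
      by (rule Sym_R[OF Sym_Pi[OF Sym_id pi]])
    ultimately show "s \<in> Sym" by simp
  qed
qed

end
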